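(* Let the setting and the algorithm RandProx be as in the context, with $g=0$ (no strong convexity of $f$ assumed). Suppose that $\lambda_{\min}(KK^* )>0$ or $\mu_{h^*}>0$, and that $0<\gamma<\frac{2}{L_f}$, $\tau>0$, and $\gamma\tau\big((1-\zeta)\|K\|^2+\omega_{\mathrm{ran}}\big)\le1$. Then the dual problem has a unique solution $u^\star$ and $(u^t)$ converges to $u^\star$ in quadratic mean.
   Context: $\mathcal{X},\mathcal{U}$ finite-dimensional real Hilbert spaces, $K:\mathcal{X}\to\mathcal{U}$ nonzero linear with adjoint $K^*$, $\lambda_{\min}(KK^* )$ the smallest eigenvalue of $KK^*$. $f:\mathcal{X}\to\mathbb{R}$ convex and $L_f$-smooth ($\nabla f$ $L_f$-Lipschitz); $h:\mathcal{U}\to\mathbb{R}\cup\{+\infty\}$ proper closed convex; $h^*$ is $\mu_{h^*}$-strongly convex for some $\mu_{h^*}\ge0$ ($h^*-\frac{\mu_{h^*}}{2}\|\cdot\|^2$ convex). $\mathrm{prox}_{\gamma\phi}(x):=\arg\min_{x'}(\gamma\phi(x')+\frac12\|x'-x\|^2)$. Primal problem: minimize $f(x)+h(Kx)$; dual: minimize $f^*(-K^*u)+h^*(u)$. It is assumed there exists $(x^\star,u^\star)$ with $0\in\nabla f(x^\star)+K^*u^\star$ and $0\in-Kx^\star+\partial h^*(u^\star)$. Algorithm RandProx (with $g=0$): inputs $x^0,u^0,\gamma>0,\tau>0,\omega\ge0$; $v^0:=K^*u^0$; for $t\ge0$: $\hat{x}^t:=x^t-\gamma\nabla f(x^t)-\gamma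 v^t$; $u^{t+1}:=u^t+\frac{1}{1+\omega}\mathcal{R}^t\big(\mathrm{prox}_{\tau h^*}(u^t+\tau K\hat{x}^t)-u^t\big)$; $v^{t+1}:=K^*u^{t+1}$; $x^{t+1}:=\hat{x}^t-\gamma(1+\omega)(v^{t+1}-v^t)$. With $\mathcal{F}_t$ the $\sigma$-algebra generated by $(x^0,u^0),\dots,(x^t,u^t)$ and $r^t:=\mathrm{prox}_{\tau h^*}(u^t+\tau K\hat{x}^t)-u^t$, the random estimate $\mathcal{R}^t(r^t)$ satisfies $\mathbb{E}[\mathcal{R}^t(r^t)\mid\mathcal{F}_t]=r^t$, $\mathbb{E}[\|\mathcal{R}^t(r^t)-r^t\|^2\mid\mathcal{F}_t]\le\omega\|r^t\|^2$, $\mathbb{E}[\|K^*(\mathcal{R}^t(r^t)-r^t)\|^2\mid\mathcal{F}_t]\le\omega_{\mathrm{ran}}\|r^t\|^2-\zeta\|K^*r^t\|^2$, for constants $\omega_{\mathrm{ran}}\ge0$, $\zeta\in[0,1]$. *)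

theory Defs
  imports "HOL-Probability.Probability"
begin

definition proper_fun :: "('a \<Rightarrow> ereal) \<Rightarrow> bool" where
  "proper_fun \<phi> \<longleftrightarrow> (\<forall>x. \<phi> x \<noteq> -\<infinity>) \<and> (\<exists>x. \<phi> x \<noteq> \<infinity>)"

definition convex_fun :: "('a::real_vector \<Rightarrow> ereal) \<Rightarrow> bool" where
  "convex_fun \<phi> \<longleftrightarrow>
     (\<forall>x y t. 0 \<le> t \<and> t \<le> 1 \<longrightarrow>
        \<phi> ((1 - t) *\<^sub>R x + t *\<^sub>R y) \<le> ereal (1 - t) * \<phi> x + ereal t * \<phi> y)"

definition closed_fun :: "('a::topological_space \<Rightarrow> ereal) \<Rightarrow> bool" where
  "closed_fun \<phi> \<longleftrightarrow> closed {(x, r::real). \<phi> x \<le> ereal r}"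

definition fenchel_conj :: "('a::real_inner \<Rightarrow> ereal) \<Rightarrow> 'a \<Rightarrow> ereal" where
  "fenchel_conj \<phi> y = (SUP x. ereal (y \<bullet> x) - \<phi> x)"

definition strongly_convex_fun :: "real \<Rightarrow> ('a::real_normed_vector \<Rightarrow> ereal) \<Rightarrow> bool" where
  "strongly_convex_fun \<mu> \<phi> \<longleftrightarrow> convex_fun (\<lambda>x. \<phi> x - ereal (\<mu> / 2 * (norm x)\<^sup>2))"

text \<open>Proximity operator: prox phi x = argmin_p (phi p + 1/2 norm (p - x)^2).
  (The scaled operator prox_{gamma phi} is obtained by passing the function gamma*phi.)\<close>
definition prox :: "('a::real_normed_vector \<Rightarrow> ereal) \<Rightarrow> 'a \<Rightarrow> 'a" where
  "prox \<phi> x = (SOME p. \<forall>q. \<phi> p + ereal ((norm (p - x))\<^sup>2 / 2) \<le> \<phi> q + ereal ((norm (q - x))\<^sup>2 / 2))"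

definition subdiff :: "('a::real_inner \<Rightarrow> ereal) \<Rightarrow> 'a \<Rightarrow> 'a set" where
  "subdiff \<phi> x = {g. \<bar>\<phi> x\<bar> \<noteq> \<infinity> \<and> (\<forall>y. \<phi> x + ereal (g \<bullet> (y - x)) \<le> \<phi> y)}"

definition lambda_min :: "('a::real_vector \<Rightarrow> 'a) \<Rightarrow> real" where
  "lambda_min A = Inf {l. \<exists>v. v \<noteq> 0 \<and> A v = l *\<^sub>R v}"

end

theory Submission
  imports Defs
begin



lemma lip_grad_bound:
  assumes lip: "L-lipschitz_on UNIV g"
  shows "norm (g a - g b) \<le> L * norm (a - b)"
  using lip by (simp add: lipschitz_on_def dist_norm)

lemma quad_upper:
  fixes f :: "'x::real_inner \<Rightarrow> real"
  assumes fg: "\<And>z. (f has_derivative (\<lambda>d. g z \<bullet> d)) (at z)"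
    and lip: "L-lipschitz_on UNIV g"
  shows "f (x + d) \<le> f x + g x \<bullet> d + L / 2 * (norm d)\<^sup>2"
proof -
  define \<phi> where "\<phi> t = f (x + t *\<^sub>R d) - f x - t * (g x \<bullet> d) - L / 2 * t\<^sup>2 * (norm d)\<^sup>2" for t
  have der: "(\<phi> has_real_derivative (g (x + t *\<^sub>R d) \<bullet> d - g x \<bullet> d - L * t * (norm d)\<^sup>2)) (at t)" for t
  proof -
    have h1: "((\<lambda>t. x + t *\<^sub>R d) has_derivative (\<lambda>h. h *\<^sub>R d)) (at t)"
      by (auto intro!: derivative_eq_intros)
    have h2: "((\<lambda>t. f (x + t *\<^sub>R d)) has_derivative (\<lambda>h. g (x + t *\<^sub>R d) \<bullet> (h *\<^sub>R d))) (at t)"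
      using has_derivative_compose[OF h1 fg] by simp
    have h3: "((\<lambda>t. f (x + t *\<^sub>R d)) has_real_derivative (g (x + t *\<^sub>R d) \<bullet> d)) (at t)"
      unfolding has_field_derivative_def
      by (rule has_derivative_eq_rhs[OF h2]) (auto simp: fun_eq_iff algebra_simps)
    show ?thesis unfolding \<phi>_def
      by (rule h3 derivative_eq_intros refl | simp)+
  qed
  have "\<phi> 1 \<le> \<phi> 0"
  proof (rule DERIV_nonpos_imp_nonincreasing[of 0 1 \<phi>])
    fix t :: real assume t: "0 \<le> t" "t \<le> 1"
    have "(g (x + t *\<^sub>R d) - g x) \<bullet> d \<le> norm (g (x + t *\<^sub>R d) - g x) * norm d"
      by (rule norm_cauchy_schwarz)
    also have "\<dots> \<le> L * norm (t *\<^sub>R d) * norm d"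
      using lip_grad_bound[OF lip, of "x + t *\<^sub>R d" x] by (simp add: mult_right_mono)
    also have "\<dots> = L * t * (norm d)\<^sup>2" using t by (simp add: power2_eq_square)
    finally show "\<exists>y. DERIV \<phi> t :> y \<and> y \<le> 0"
      using der[of t] by (intro exI[of _ "g (x + t *\<^sub>R d) \<bullet> d - g x \<bullet> d - L * t * (norm d)\<^sup>2"])
         (auto simp: inner_diff_left)
  qed simp
  then show ?thesis by (simp add: \<phi>_def)
qed

lemma quad_lower:
  fixes f :: "'x::real_inner \<Rightarrow> real"
  assumes fg: "\<And>z. (f has_derivative (\<lambda>d. g z \<bullet> d)) (at z)"
    and lip: "L-lipschitz_on UNIV g"
  shows "f x + g x \<bullet> d - L / 2 * (norm d)\<^sup>2 \<le> f (x + d)"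
proof -
  have fg': "((\<lambda>z. - f z) has_derivative (\<lambda>d. (- g z) \<bullet> d)) (at z)" for z
    using has_derivative_minus[OF fg[of z]] by simp
  have lip': "L-lipschitz_on UNIV (\<lambda>z. - g z)"
    using lip by (simp add: lipschitz_on_def dist_norm norm_minus_commute[of "g _" "g _"] )
  show ?thesis using quad_upper[OF fg' lip', of x d] by simp
qed

lemma le_of_small:
  fixes A B C :: real
  assumes "\<And>t. 0 < t \<Longrightarrow> t \<le> 1 \<Longrightarrow> A \<le> B + C * t"
  shows "A \<le> B"
proof (rule ccontr)
  assume "\<not> A \<le> B"
  define t where "t = min 1 ((A - B) / (2 * (\<bar>C\<bar> + 1)))"
  have tp: "0 < t" "t \<le> 1" using \<open>\<not> A \<le> B\<close> by (auto simp: t_def abs_add_one_gt_zero add_pos_nonneg)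
  have "C * t \<le> \<bar>C\<bar> * t" using tp by (simp add: mult_right_mono)
  also have "\<dots> \<le> (\<bar>C\<bar> + 1) * t" using tp by (simp add: mult_right_mono)
  also have "\<dots> \<le> (\<bar>C\<bar> + 1) * ((A - B) / (2 * (\<bar>C\<bar> + 1)))"
    by (intro mult_left_mono) (auto simp: t_def)
  also have "\<dots> = (A - B) / 2" by (simp add: field_simps)
  finally have "C * t \<le> (A - B) / 2" .
  with assms[OF tp] \<open>\<not> A \<le> B\<close> show False by argo
qed

lemma grad_ineq:
  fixes f :: "'x::real_inner \<Rightarrow> real"
  assumes conv: "convex_on UNIV f"
    and fg: "\<And>z. (f has_derivative (\<lambda>d. g z \<bullet> d)) (at z)"
    and lip: "L-lipschitz_on UNIV g"
  shows "f x + g x \<bullet> (y - x) \<le> f y"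
proof -
  have "g x \<bullet> (y - x) \<le> f y - f x + (L / 2 * (norm (y - x))\<^sup>2) * t" if t: "0 < t" "t \<le> 1" for t
  proof -
    have c: "f ((1 - t) *\<^sub>R x + t *\<^sub>R y) \<le> (1 - t) * f x + t * f y"
      using conv t by (intro convex_onD[OF conv]) auto
    have e: "(1 - t) *\<^sub>R x + t *\<^sub>R y = x + t *\<^sub>R (y - x)" by (simp add: algebra_simps)
    have q: "f x + g x \<bullet> (t *\<^sub>R (y - x)) - L / 2 * (norm (t *\<^sub>R (y - x)))\<^sup>2 \<le> f (x + t *\<^sub>R (y - x))"
      by (rule quad_lower[OF fg lip])
    have nn: "(norm (t *\<^sub>R (y - x)))\<^sup>2 = t * t * (norm (y - x))\<^sup>2"
      using t by (simp add: power2_eq_square)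
    have "t * (g x \<bullet> (y - x)) - t * t * (L / 2 * (norm (y - x))\<^sup>2) \<le> t * (f y - f x)"
      using c q unfolding e nn inner_scaleR_right by (simp add: algebra_simps)
    then have "t * (g x \<bullet> (y - x)) \<le> t * (f y - f x + (L / 2 * (norm (y - x))\<^sup>2) * t)"
      by (simp add: algebra_simps)
    then show ?thesis using t by simp
  qed
  then have "g x \<bullet> (y - x) \<le> f y - f x" by (rule le_of_small)
  then show ?thesis by simp
qed

lemma cocoercive:
  fixes f :: "'x::real_inner \<Rightarrow> real"
  assumes conv: "convex_on UNIV f"
    and fg: "\<And>z. (f has_derivative (\<lambda>d. g z \<bullet> d)) (at z)"
    and lip: "L-lipschitz_on UNIV g"
  shows "(norm (g x - g y))\<^sup>2 \<le> L * ((g x - g y) \<bullet> (x - y))"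
proof (cases "L = 0")
  case True
  then have "g x = g y" using lip_grad_bound[OF lip, of x y] by simp
  then show ?thesis by simp
next
  case False
  then have L: "L > 0" using lip by (auto simp: lipschitz_on_def)
  have key: "f a - g a \<bullet> a \<le> f b - g a \<bullet> b - (norm (g b - g a))\<^sup>2 / (2 * L)" for a b
  proof -
    define v where "v = g b - g a"
    have q: "f (b + (- (1 / L)) *\<^sub>R v) \<le> f b + g b \<bullet> ((- (1 / L)) *\<^sub>R v) + L / 2 * (norm ((- (1 / L)) *\<^sub>R v))\<^sup>2"
      by (rule quad_upper[OF fg lip])
    have gi: "f a + g a \<bullet> ((b + (- (1 / L)) *\<^sub>R v) - a) \<le> f (b + (- (1 / L)) *\<^sub>R v)"
      by (rule grad_ineq[OF conv fg lip])
    have n: "(norm ((- (1 / L)) *\<^sub>R v))\<^sup>2 = (norm v)\<^sup>2 / L\<^sup>2"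
      using L by (simp add: power_divide power_mult_distrib)
    have vv: "g b \<bullet> v - g a \<bullet> v = (norm v)\<^sup>2"
      by (simp add: v_def power2_norm_eq_inner inner_diff_left inner_diff_right)
    define F where "F = f (b + (- (1 / L)) *\<^sub>R v)"
    have q': "F \<le> f b - (g b \<bullet> v) / L + (norm v)\<^sup>2 / (2 * L)"
      using q n L unfolding F_def[symmetric] by (simp add: power2_eq_square field_simps)
    have gi': "f a + g a \<bullet> b - g a \<bullet> a - (g a \<bullet> v) / L \<le> F"
      using gi unfolding F_def[symmetric] by (simp add: inner_diff_right inner_add_right)
    have "f a + g a \<bullet> b - g a \<bullet> a \<le> f b - (g b \<bullet> v - g a \<bullet> v) / L + (norm v)\<^sup>2 / (2 * L)"
      using q' gi' by (simp add: diff_divide_distrib)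
    also have "\<dots> = f b - (norm v)\<^sup>2 / (2 * L)" unfolding vv using L
      by (simp add: field_simps)
    finally show ?thesis unfolding v_def by (simp add: inner_diff_right)
  qed
  have k1: "f x - g x \<bullet> x \<le> f y - g x \<bullet> y - (norm (g y - g x))\<^sup>2 / (2 * L)" by (rule key)
  have k2: "f y - g y \<bullet> y \<le> f x - g y \<bullet> x - (norm (g x - g y))\<^sup>2 / (2 * L)" by (rule key)
  have nn: "norm (g y - g x) = norm (g x - g y)" by (rule norm_minus_commute)
  have "(norm (g x - g y))\<^sup>2 / L \<le> (g x - g y) \<bullet> (x - y)"
    using k1 k2 unfolding nn by (simp add: inner_diff_left inner_diff_right inner_commute field_simps)
  then show ?thesis using L by (simp add: field_simps)
qed

lemma grad_step_nonexp:
  fixes f :: "'x::real_inner \<Rightarrow> real"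
  assumes conv: "convex_on UNIV f"
    and fg: "\<And>z. (f has_derivative (\<lambda>d. g z \<bullet> d)) (at z)"
    and lip: "L-lipschitz_on UNIV g"
    and gam: "0 < \<gamma>" "\<gamma> * L \<le> 2"
  shows "(norm ((x - y) - \<gamma> *\<^sub>R (g x - g y)))\<^sup>2 \<le> (norm (x - y))\<^sup>2"
proof -
  have L: "L \<ge> 0" using lip by (auto simp: lipschitz_on_def)
  define p where "p = (g x - g y) \<bullet> (x - y)"
  define n where "n = (norm (g x - g y))\<^sup>2"
  have c: "n \<le> L * p" unfolding n_def p_def by (rule cocoercive[OF conv fg lip])
  have n0: "n \<ge> 0" by (simp add: n_def)
  have p0: "p \<ge> 0"
  proof (cases "n = 0")
    case True then show ?thesis by (simp add: n_def p_def)
  next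
    case False then have "0 < L * p" using c n0 by linarith
    then show ?thesis using L by (simp add: zero_less_mult_iff)
  qed
  have "\<gamma> * n \<le> \<gamma> * (L * p)" using c gam by simp
  also have "\<dots> = (\<gamma> * L) * p" by simp
  also have "\<dots> \<le> 2 * p" using gam p0 by (simp add: mult_right_mono)
  finally have "\<gamma> * n \<le> 2 * p" .
  then have "\<gamma> * (\<gamma> * n) \<le> \<gamma> * (2 * p)" using gam by simp
  moreover have "(norm ((x - y) - \<gamma> *\<^sub>R (g x - g y)))\<^sup>2 = (norm (x - y))\<^sup>2 - 2 * \<gamma> * p + \<gamma> * (\<gamma> * n)"
    unfolding n_def p_def power2_norm_eq_inner
    by (simp add: inner_diff_left inner_diff_right inner_commute algebra_simps)
  ultimately show ?thesis by simp
qed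




lemma fc_lower: "ereal (y \<bullet> x) - \<phi> x \<le> fenchel_conj \<phi> y"
  unfolding fenchel_conj_def by (rule SUP_upper) simp

lemma fc_f_at_grad:
  fixes f :: "'x::real_inner \<Rightarrow> real"
  assumes conv: "convex_on UNIV f"
    and fg: "\<And>z. (f has_derivative (\<lambda>d. g z \<bullet> d)) (at z)"
    and lip: "L-lipschitz_on UNIV g"
  shows "fenchel_conj (\<lambda>z. ereal (f z)) (g xs) = ereal (g xs \<bullet> xs - f xs)"
proof (rule antisym)
  show "fenchel_conj (\<lambda>z. ereal (f z)) (g xs) \<le> ereal (g xs \<bullet> xs - f xs)"
    unfolding fenchel_conj_def
  proof (rule SUP_least)
    fix x
    have "f xs + g xs \<bullet> (x - xs) \<le> f x" by (rule grad_ineq[OF conv fg lip])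
    then show "ereal (g xs \<bullet> x) - ereal (f x) \<le> ereal (g xs \<bullet> xs - f xs)"
      by (simp add: inner_diff_right)
  qed
  show "ereal (g xs \<bullet> xs - f xs) \<le> fenchel_conj (\<lambda>z. ereal (f z)) (g xs)"
    using fc_lower[of "g xs" xs "\<lambda>z. ereal (f z)"] by simp
qed

lemma fc_f_strong:
  fixes f :: "'x::real_inner \<Rightarrow> real"
  assumes fg: "\<And>z. (f has_derivative (\<lambda>d. g z \<bullet> d)) (at z)"
    and lip: "L-lipschitz_on UNIV g"
  shows "ereal (y \<bullet> xs - f xs + (norm (y - g xs))\<^sup>2 / (2 * (L + 1))) \<le> fenchel_conj (\<lambda>z. ereal (f z)) y"
proof -
  have L: "L \<ge> 0" using lip by (auto simp: lipschitz_on_def)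
  define s where "s = 1 / (L + 1)"
  define d where "d = y - g xs"
  have s: "0 < s" "L * s \<le> 1" using L by (auto simp: s_def field_simps)
  have q: "f (xs + s *\<^sub>R d) \<le> f xs + g xs \<bullet> (s *\<^sub>R d) + L / 2 * (norm (s *\<^sub>R d))\<^sup>2"
    by (rule quad_upper[OF fg lip])
  have nd: "(norm (s *\<^sub>R d))\<^sup>2 = s * s * (norm d)\<^sup>2" using s by (simp add: power2_eq_square)
  have yd: "y \<bullet> d - g xs \<bullet> d = (norm d)\<^sup>2" by (simp add: d_def power2_norm_eq_inner inner_diff_left)
  have "L * s * s * (norm d)\<^sup>2 \<le> s * (norm d)\<^sup>2"
    using s by (simp add: mult_right_mono mult.commute mult.left_commute)
  then have key: "s * (norm d)\<^sup>2 / 2 \<le> s * (norm d)\<^sup>2 - L / 2 * (s * s * (norm d)\<^sup>2)" by simp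
  have "y \<bullet> xs - f xs + (norm (y - g xs))\<^sup>2 / (2 * (L + 1)) = y \<bullet> xs - f xs + s * (norm d)\<^sup>2 / 2"
    by (simp add: s_def d_def)
  also have "\<dots> \<le> y \<bullet> xs - f xs + s * (y \<bullet> d - g xs \<bullet> d) - L / 2 * (s * s * (norm d)\<^sup>2)"
    using key unfolding yd by simp
  also have "\<dots> \<le> y \<bullet> (xs + s *\<^sub>R d) - f (xs + s *\<^sub>R d)"
    using q unfolding nd by (simp add: inner_add_right algebra_simps)
  finally have "ereal (y \<bullet> xs - f xs + (norm (y - g xs))\<^sup>2 / (2 * (L + 1))) \<le> ereal (y \<bullet> (xs + s *\<^sub>R d)) - ereal (f (xs + s *\<^sub>R d))"
    by simp
  also have "\<dots> \<le> fenchel_conj (\<lambda>z. ereal (f z)) y" by (rule fc_lower)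
  finally show ?thesis .
qed

lemma hs_lb:
  assumes "proper_fun h"
  obtains z0 c where "\<And>v. ereal (v \<bullet> z0 - c) \<le> fenchel_conj h v"
proof -
  obtain z0 where z0: "h z0 \<noteq> \<infinity>" using assms by (auto simp: proper_fun_def)
  moreover have "h z0 \<noteq> -\<infinity>" using assms by (auto simp: proper_fun_def)
  ultimately obtain c where c: "h z0 = ereal c" by (cases "h z0") auto
  have "ereal (v \<bullet> z0 - c) \<le> fenchel_conj h v" for v
    using fc_lower[of v z0 h] c by simp
  then show ?thesis by (rule that)
qed

lemma hs_not_minf:
  assumes "proper_fun h"
  shows "fenchel_conj h v \<noteq> -\<infinity>"
proof -
  obtain z0 c where "\<And>v. ereal (v \<bullet> z0 - c) \<le> fenchel_conj h v" using hs_lb[OF assms] by blast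
  from this[of v] show ?thesis by auto
qed

lemma norm_convex_comb:
  fixes p q :: "'a::real_inner"
  shows "(norm (p + t *\<^sub>R (q - p)))\<^sup>2 = (1 - t) * (norm p)\<^sup>2 + t * (norm q)\<^sup>2 - t * (1 - t) * (norm (q - p))\<^sup>2"
  unfolding power2_norm_eq_inner
  by (simp add: inner_add_left inner_add_right inner_diff_left inner_diff_right inner_commute algebra_simps)

lemma sc_ineq:
  fixes \<phi> :: "'a::real_inner \<Rightarrow> ereal"
  assumes sc: "strongly_convex_fun \<mu> \<phi>" and p: "\<phi> p = ereal a" and q: "\<phi> q = ereal b"
    and t: "0 \<le> t" "t \<le> 1"
  shows "\<phi> (p + t *\<^sub>R (q - p)) \<le> ereal ((1 - t) * a + t * b - \<mu> / 2 * (t * (1 - t) * (norm (q - p))\<^sup>2))"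
proof -
  define m where "m = p + t *\<^sub>R (q - p)"
  have e: "(1 - t) *\<^sub>R p + t *\<^sub>R q = m" by (simp add: m_def algebra_simps)
  have "\<phi> m - ereal (\<mu> / 2 * (norm m)\<^sup>2) \<le>
     ereal (1 - t) * (\<phi> p - ereal (\<mu> / 2 * (norm p)\<^sup>2)) + ereal t * (\<phi> q - ereal (\<mu> / 2 * (norm q)\<^sup>2))"
    using sc t unfolding strongly_convex_fun_def convex_fun_def e[symmetric] by blast
  also have "\<dots> = ereal ((1 - t) * (a - \<mu> / 2 * (norm p)\<^sup>2) + t * (b - \<mu> / 2 * (norm q)\<^sup>2))"
    by (simp add: p q)
  finally have "\<phi> m \<le> ereal ((1 - t) * (a - \<mu> / 2 * (norm p)\<^sup>2) + t * (b - \<mu> / 2 * (norm q)\<^sup>2) + \<mu> / 2 * (norm m)\<^sup>2)"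
    by (simp add: ereal_minus_le)
  also have "(1 - t) * (a - \<mu> / 2 * (norm p)\<^sup>2) + t * (b - \<mu> / 2 * (norm q)\<^sup>2) + \<mu> / 2 * (norm m)\<^sup>2
      = (1 - t) * a + t * b - \<mu> / 2 * (t * (1 - t) * (norm (q - p))\<^sup>2)"
    unfolding m_def norm_convex_comb by (simp add: field_simps)
  finally show ?thesis by (simp add: m_def)
qed

lemma sc_strengthen:
  fixes \<phi> :: "'a::real_inner \<Rightarrow> ereal"
  assumes sc: "strongly_convex_fun \<mu> \<phi>" and p: "\<phi> p = ereal a"
    and sub: "\<And>q. ereal (a + g \<bullet> (q - p)) \<le> \<phi> q"
  shows "ereal (a + g \<bullet> (q - p) + \<mu> / 2 * (norm (q - p))\<^sup>2) \<le> \<phi> q"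
proof (cases "\<phi> q")
  case PInf then show ?thesis by simp
next
  case MInf then show ?thesis using sub[of q] by simp
next
  case (real b)
  have "g \<bullet> (q - p) \<le> b - a - \<mu> / 2 * (norm (q - p))\<^sup>2 + (\<mu> / 2 * (norm (q - p))\<^sup>2) * t"
    if t: "0 < t" "t \<le> 1" for t
  proof -
    have "ereal (a + g \<bullet> ((p + t *\<^sub>R (q - p)) - p)) \<le> \<phi> (p + t *\<^sub>R (q - p))" by (rule sub)
    also have "\<dots> \<le> ereal ((1 - t) * a + t * b - \<mu> / 2 * (t * (1 - t) * (norm (q - p))\<^sup>2))"
      using sc_ineq[OF sc p real] t by simp
    finally have "t * (g \<bullet> (q - p)) \<le> t * (b - a - \<mu> / 2 * (norm (q - p))\<^sup>2 + (\<mu> / 2 * (norm (q - p))\<^sup>2) * t)"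
      by (simp add: algebra_simps)
    then show ?thesis using t by simp
  qed
  then have "g \<bullet> (q - p) \<le> b - a - \<mu> / 2 * (norm (q - p))\<^sup>2" by (rule le_of_small)
  then show ?thesis using real by simp
qed




lemma sq_bound_aux:
  fixes s \<beta> C :: real
  assumes "\<beta> \<ge> 0" "s\<^sup>2 / 2 - s * \<beta> \<le> C" "s \<ge> 0"
  shows "s \<le> 4 * \<beta>\<^sup>2 + 4 * \<bar>C\<bar> + 1"
proof -
  have "0 \<le> (s - 2 * \<beta>)\<^sup>2 / 2" by simp
  then have "2 * \<beta> * s \<le> s\<^sup>2 / 2 + 2 * \<beta>\<^sup>2" by (simp add: power2_eq_square algebra_simps)
  then have s2: "s\<^sup>2 \<le> 4 * \<beta>\<^sup>2 + 4 * \<bar>C\<bar>" using assms by (simp add: power2_eq_square algebra_simps)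
  have "0 \<le> (s - 1)\<^sup>2" by simp
  then have "2 * s \<le> s\<^sup>2 + 1" by (simp add: power2_eq_square algebra_simps)
  then have "s \<le> s\<^sup>2 + 1" using assms(3) by linarith
  with s2 show ?thesis by linarith
qed

lemma prox_min_exists:
  fixes h :: "'u::euclidean_space \<Rightarrow> ereal"
  assumes hp: "proper_fun h" and tau: "0 < \<tau>" and u0: "fenchel_conj h u0 \<noteq> \<infinity>"
  shows "\<exists>p. \<forall>q. ereal \<tau> * fenchel_conj h p + ereal ((norm (p - z))\<^sup>2 / 2)
                \<le> ereal \<tau> * fenchel_conj h q + ereal ((norm (q - z))\<^sup>2 / 2)"
proof -
  define \<phi> where "\<phi> = fenchel_conj h"
  define \<Phi> where "\<Phi> q = ereal \<tau> * \<phi> q + ereal ((norm (q - z))\<^sup>2 / 2)" for q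
  have \<phi>nm: "\<phi> q \<noteq> -\<infinity>" for q unfolding \<phi>_def by (rule hs_not_minf[OF hp])
  obtain z0 c0 where lb: "\<And>v. ereal (v \<bullet> z0 - c0) \<le> \<phi> v" using hs_lb[OF hp] unfolding \<phi>_def by blast
  have \<Phi>_real: "\<phi> q = ereal v \<Longrightarrow> \<Phi> q = ereal (\<tau> * v + (norm (q - z))\<^sup>2 / 2)" for q v
    by (simp add: \<Phi>_def)
  have \<Phi>_inf: "\<phi> q = \<infinity> \<Longrightarrow> \<Phi> q = \<infinity>" for q using tau by (simp add: \<Phi>_def)
  have \<Phi>nm: "\<Phi> q \<noteq> -\<infinity>" for q
    using \<phi>nm[of q] \<Phi>_real[of q] \<Phi>_inf[of q] by (cases "\<phi> q") auto
  define S where "S c = {q. \<Phi> q \<le> ereal c}" for c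
  have S_eq: "S c = (\<Inter>x\<in>{x. h x \<noteq> \<infinity>}. {q. q \<bullet> x - real_of_ereal (h x) \<le> (c - (norm (q - z))\<^sup>2 / 2) / \<tau>})" for c
  proof (intro set_eqI iffI)
    fix q assume "q \<in> S c"
    then have Q: "\<Phi> q \<le> ereal c" by (simp add: S_def)
    then obtain v where v: "\<phi> q = ereal v" using \<phi>nm[of q] \<Phi>_inf[of q] by (cases "\<phi> q") auto
    then have "\<tau> * v + (norm (q - z))\<^sup>2 / 2 \<le> c" using Q \<Phi>_real by simp
    then have vle: "v \<le> (c - (norm (q - z))\<^sup>2 / 2) / \<tau>" using tau by (simp add: field_simps)
    show "q \<in> (\<Inter>x\<in>{x. h x \<noteq> \<infinity>}. {q. q \<bullet> x - real_of_ereal (h x) \<le> (c - (norm (q - z))\<^sup>2 / 2) / \<tau>})"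
    proof safe
      fix x assume hx: "h x \<noteq> \<infinity>"
      have "h x \<noteq> -\<infinity>" using hp by (simp add: proper_fun_def)
      with hx obtain b where b: "h x = ereal b" by (cases "h x") auto
      have "ereal (q \<bullet> x) - h x \<le> \<phi> q" unfolding \<phi>_def by (rule fc_lower)
      then show "q \<bullet> x - real_of_ereal (h x) \<le> (c - (norm (q - z))\<^sup>2 / 2) / \<tau>"
        using b v vle by simp
    qed
  next
    fix q assume A: "q \<in> (\<Inter>x\<in>{x. h x \<noteq> \<infinity>}. {q. q \<bullet> x - real_of_ereal (h x) \<le> (c - (norm (q - z))\<^sup>2 / 2) / \<tau>})"
    have "\<phi> q \<le> ereal ((c - (norm (q - z))\<^sup>2 / 2) / \<tau>)"
      unfolding \<phi>_def fenchel_conj_def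
    proof (rule SUP_least)
      fix x
      show "ereal (q \<bullet> x) - h x \<le> ereal ((c - (norm (q - z))\<^sup>2 / 2) / \<tau>)"
      proof (cases "h x")
        case (real b)
        then have "h x \<noteq> \<infinity>" by simp
        then have "q \<bullet> x - real_of_ereal (h x) \<le> (c - (norm (q - z))\<^sup>2 / 2) / \<tau>" using A by blast
        then show ?thesis using real by simp
      qed (use hp in \<open>auto simp: proper_fun_def\<close>)
    qed
    then obtain v where v: "\<phi> q = ereal v" "v \<le> (c - (norm (q - z))\<^sup>2 / 2) / \<tau>"
      using \<phi>nm[of q] by (cases "\<phi> q") auto
    then have "\<tau> * v + (norm (q - z))\<^sup>2 / 2 \<le> c" using tau by (simp add: field_simps)
    then show "q \<in> S c" using \<Phi>_real[OF v(1)] by (simp add: S_def)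
  qed
  have closedS: "closed (S c)" for c
    unfolding S_eq
    by (intro closed_INT ballI closed_Collect_le continuous_intros) (use tau in auto)
  have boundedS: "bounded (S c)" for c
  proof -
    define \<beta> where "\<beta> = \<tau> * norm z0 + norm z"
    define C where "C = c + \<tau> * c0 - (norm z)\<^sup>2 / 2"
    have "norm q \<le> 4 * \<beta>\<^sup>2 + 4 * \<bar>C\<bar> + 1" if q: "q \<in> S c" for q
    proof (rule sq_bound_aux)
      show "\<beta> \<ge> 0" using tau by (simp add: \<beta>_def)
      have Q: "\<Phi> q \<le> ereal c" using q by (simp add: S_def)
      then obtain v where v: "\<phi> q = ereal v" using \<phi>nm[of q] \<Phi>_inf[of q] by (cases "\<phi> q") auto
      then have c1: "\<tau> * v + (norm (q - z))\<^sup>2 / 2 \<le> c" using Q \<Phi>_real by simp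
      have "q \<bullet> z0 - c0 \<le> v" using lb[of q] v by simp
      then have c2: "\<tau> * (q \<bullet> z0 - c0) \<le> \<tau> * v" using tau by simp
      have c3: "- (norm q * norm z0) \<le> q \<bullet> z0" using norm_cauchy_schwarz[of "-q" z0] by simp
      have c4: "q \<bullet> z \<le> norm q * norm z" by (rule norm_cauchy_schwarz)
      have c5: "(norm (q - z))\<^sup>2 = (norm q)\<^sup>2 - 2 * (q \<bullet> z) + (norm z)\<^sup>2"
        unfolding power2_norm_eq_inner by (simp add: inner_diff_left inner_diff_right inner_commute)
      have c6: "\<tau> * (- (norm q * norm z0)) \<le> \<tau> * (q \<bullet> z0)" using c3 tau by (intro mult_left_mono) auto
      show "(norm q)\<^sup>2 / 2 - norm q * \<beta> \<le> C"
        using c1 c2 c4 c5 c6 unfolding \<beta>_def C_def by (simp add: algebra_simps) argo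
    qed simp
    then show ?thesis unfolding bounded_iff by blast
  qed
  have compactS: "compact (S c)" for c using closedS boundedS by (simp add: compact_eq_bounded_closed)
  obtain c0' where c0': "\<Phi> u0 = ereal c0'"
    using u0 \<phi>nm[of u0] \<Phi>_real[of u0] unfolding \<phi>_def[symmetric] by (cases "\<phi> u0") auto
  define T where "T q = S (real_of_ereal (min (\<Phi> q) (\<Phi> u0)))" for q
  have T_eq: "T q = {p. \<Phi> p \<le> min (\<Phi> q) (\<Phi> u0)}" for q
  proof -
    have "min (\<Phi> q) (\<Phi> u0) = ereal (real_of_ereal (min (\<Phi> q) (\<Phi> u0)))"
      using \<Phi>nm[of q] c0' by (cases "\<Phi> q") (auto simp: min_def)
    then show ?thesis unfolding T_def S_def by simp
  qed
  have "\<Inter> (range T) \<noteq> {}"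
  proof (rule compact_chain)
    show "\<And>A. A \<in> range T \<Longrightarrow> compact A" using compactS by (auto simp: T_def)
    show "{} \<notin> range T"
    proof
      assume "{} \<in> range T"
      then obtain q where "T q = {}" by auto
      moreover have "q \<in> T q \<or> u0 \<in> T q" unfolding T_eq by (auto simp: min_def)
      ultimately show False by auto
    qed
    show "A \<subseteq> B \<or> B \<subseteq> A" if AB: "A \<in> range T \<and> B \<in> range T" for A B
    proof -
      obtain q1 q2 where "A = T q1" "B = T q2" using AB by (auto simp: image_iff)
      then show ?thesis unfolding T_eq
        by (cases "min (\<Phi> q1) (\<Phi> u0) \<le> min (\<Phi> q2) (\<Phi> u0)") auto
    qed
  qed
  then obtain p where p: "p \<in> T q" for q by blast
  have "\<Phi> p \<le> \<Phi> q" for q using p[of q] unfolding T_eq by simp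
  then show ?thesis unfolding \<Phi>_def \<phi>_def by blast
qed




lemma prox_min:
  fixes h :: "'u::euclidean_space \<Rightarrow> ereal"
  assumes hp: "proper_fun h" and tau: "0 < \<tau>" and u0: "fenchel_conj h u0 \<noteq> \<infinity>"
  shows "ereal \<tau> * fenchel_conj h (prox (\<lambda>v. ereal \<tau> * fenchel_conj h v) z)
            + ereal ((norm (prox (\<lambda>v. ereal \<tau> * fenchel_conj h v) z - z))\<^sup>2 / 2)
         \<le> ereal \<tau> * fenchel_conj h q + ereal ((norm (q - z))\<^sup>2 / 2)"
  using someI_ex[OF prox_min_exists[OF hp tau u0, of z]] unfolding prox_def by blast

lemma prox_subgrad:
  fixes h :: "'u::euclidean_space \<Rightarrow> ereal" and z :: 'u
  assumes hp: "proper_fun h" and tau: "0 < \<tau>" and u0: "fenchel_conj h u0 \<noteq> \<infinity>"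
    and sc: "strongly_convex_fun \<mu> (fenchel_conj h)" and mu: "\<mu> \<ge> 0"
  defines "p \<equiv> prox (\<lambda>v. ereal \<tau> * fenchel_conj h v) z"
  shows "\<exists>a. fenchel_conj h p = ereal a \<and>
     (\<forall>q. ereal (a + ((1 / \<tau>) *\<^sub>R (z - p)) \<bullet> (q - p) + \<mu> / 2 * (norm (q - p))\<^sup>2) \<le> fenchel_conj h q)"
proof -
  define \<phi> where "\<phi> = fenchel_conj h"
  have pm: "ereal \<tau> * \<phi> p + ereal ((norm (p - z))\<^sup>2 / 2) \<le> ereal \<tau> * \<phi> q + ereal ((norm (q - z))\<^sup>2 / 2)" for q
    unfolding p_def \<phi>_def by (rule prox_min[OF hp tau u0])
  have nm: "\<phi> q \<noteq> -\<infinity>" for q unfolding \<phi>_def by (rule hs_not_minf[OF hp])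
  have "\<phi> p \<noteq> \<infinity>"
  proof
    assume "\<phi> p = \<infinity>"
    then have E: "ereal \<tau> * \<phi> p + ereal ((norm (p - z))\<^sup>2 / 2) = \<infinity>" using tau by simp
    obtain v where v: "\<phi> u0 = ereal v" using u0 nm[of u0] unfolding \<phi>_def[symmetric] by (cases "\<phi> u0") auto
    have R: "ereal \<tau> * \<phi> u0 + ereal ((norm (u0 - z))\<^sup>2 / 2) = ereal (\<tau> * v + (norm (u0 - z))\<^sup>2 / 2)"
      using v by simp
    from pm[of u0] have "\<infinity> \<le> ereal (\<tau> * v + (norm (u0 - z))\<^sup>2 / 2)" unfolding E R .
    then show False by simp
  qed
  then obtain a where a: "\<phi> p = ereal a" using nm[of p] by (cases "\<phi> p") auto
  have sub: "ereal (a + ((1 / \<tau>) *\<^sub>R (z - p)) \<bullet> (q - p)) \<le> \<phi> q" for q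
  proof (cases "\<phi> q")
    case PInf then show ?thesis by simp
  next
    case MInf then show ?thesis using nm by simp
  next
    case (real b)
    define d where "d = q - p"
    have "a \<le> b + ((p - z) \<bullet> d) / \<tau> + ((norm d)\<^sup>2 / (2 * \<tau>)) * t" if t: "0 < t" "t \<le> 1" for t
    proof -
      define m where "m = p + t *\<^sub>R d"
      have cm: "\<phi> m \<le> ereal ((1 - t) * a + t * b - \<mu> / 2 * (t * (1 - t) * (norm d)\<^sup>2))"
        unfolding m_def d_def using sc_ineq[OF sc[folded \<phi>_def] a real] t by simp
      have "\<mu> / 2 * (t * (1 - t) * (norm d)\<^sup>2) \<ge> 0" using mu t by simp
      then have "ereal ((1 - t) * a + t * b - \<mu> / 2 * (t * (1 - t) * (norm d)\<^sup>2)) \<le> ereal ((1 - t) * a + t * b)"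
        by simp
      with cm have cm': "\<phi> m \<le> ereal ((1 - t) * a + t * b)" by (rule order_trans)
      have "ereal (\<tau> * a + (norm (p - z))\<^sup>2 / 2) \<le> ereal \<tau> * \<phi> m + ereal ((norm (m - z))\<^sup>2 / 2)"
        using pm[of m] a by simp
      also have "\<dots> \<le> ereal \<tau> * ereal ((1 - t) * a + t * b) + ereal ((norm (m - z))\<^sup>2 / 2)"
        using cm' tau by (intro add_right_mono ereal_mult_left_mono) auto
      finally have i1: "\<tau> * a + (norm (p - z))\<^sup>2 / 2 \<le> \<tau> * ((1 - t) * a + t * b) + (norm (m - z))\<^sup>2 / 2"
        by simp
      have nmz: "(norm (m - z))\<^sup>2 = (norm (p - z))\<^sup>2 + 2 * t * ((p - z) \<bullet> d) + t * t * (norm d)\<^sup>2"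
        unfolding m_def power2_norm_eq_inner
        by (simp add: inner_add_left inner_add_right inner_diff_left inner_diff_right inner_commute algebra_simps)
      have "t * (\<tau> * a) \<le> t * (\<tau> * b + (p - z) \<bullet> d + (norm d)\<^sup>2 / 2 * t)"
        using i1 unfolding nmz by (simp add: algebra_simps) argo
      then have "\<tau> * a \<le> \<tau> * b + (p - z) \<bullet> d + (norm d)\<^sup>2 / 2 * t" using t by simp
      then have "a \<le> (\<tau> * b + (p - z) \<bullet> d + (norm d)\<^sup>2 / 2 * t) / \<tau>"
        using tau by (subst pos_le_divide_eq) (auto simp: mult.commute)
      also have "\<dots> = b + ((p - z) \<bullet> d) / \<tau> + ((norm d)\<^sup>2 / (2 * \<tau>)) * t"
        using tau by (simp add: field_simps)
      finally show ?thesis .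
    qed
    then have "a \<le> b + ((p - z) \<bullet> d) / \<tau>" by (rule le_of_small)
    moreover have "((1 / \<tau>) *\<^sub>R (z - p)) \<bullet> d = - (((p - z) \<bullet> d) / \<tau>)"
    proof -
      have "(z - p) \<bullet> d = - ((p - z) \<bullet> d)" by (simp add: inner_diff_left)
      then show ?thesis by simp
    qed
    ultimately have "a + ((1 / \<tau>) *\<^sub>R (z - p)) \<bullet> d \<le> b" by linarith
    then show ?thesis using real by (simp add: d_def)
  qed
  have "ereal (a + ((1 / \<tau>) *\<^sub>R (z - p)) \<bullet> (q - p) + \<mu> / 2 * (norm (q - p))\<^sup>2) \<le> \<phi> q" for q
    by (rule sc_strengthen[OF sc[folded \<phi>_def] a sub])
  then show ?thesis using a unfolding \<phi>_def by blast
qed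

lemma prox_nonexp:
  fixes h :: "'u::euclidean_space \<Rightarrow> ereal"
  assumes hp: "proper_fun h" and tau: "0 < \<tau>" and u0: "fenchel_conj h u0 \<noteq> \<infinity>"
    and sc: "strongly_convex_fun \<mu> (fenchel_conj h)" and mu: "\<mu> \<ge> 0"
  shows "norm (prox (\<lambda>v. ereal \<tau> * fenchel_conj h v) z1 - prox (\<lambda>v. ereal \<tau> * fenchel_conj h v) z2) \<le> norm (z1 - z2)"
proof -
  define p1 where "p1 = prox (\<lambda>v. ereal \<tau> * fenchel_conj h v) z1"
  define p2 where "p2 = prox (\<lambda>v. ereal \<tau> * fenchel_conj h v) z2"
  obtain a1 where a1: "fenchel_conj h p1 = ereal a1"
    "\<And>q. ereal (a1 + ((1 / \<tau>) *\<^sub>R (z1 - p1)) \<bullet> (q - p1) + \<mu> / 2 * (norm (q - p1))\<^sup>2) \<le> fenchel_conj h q"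
    using prox_subgrad[OF hp tau u0 sc mu, of z1] unfolding p1_def by blast
  obtain a2 where a2: "fenchel_conj h p2 = ereal a2"
    "\<And>q. ereal (a2 + ((1 / \<tau>) *\<^sub>R (z2 - p2)) \<bullet> (q - p2) + \<mu> / 2 * (norm (q - p2))\<^sup>2) \<le> fenchel_conj h q"
    using prox_subgrad[OF hp tau u0 sc mu, of z2] unfolding p2_def by blast
  have i1: "a1 + ((1 / \<tau>) *\<^sub>R (z1 - p1)) \<bullet> (p2 - p1) + \<mu> / 2 * (norm (p2 - p1))\<^sup>2 \<le> a2"
    using a1(2)[of p2] a2(1) by simp
  have i2: "a2 + ((1 / \<tau>) *\<^sub>R (z2 - p2)) \<bullet> (p1 - p2) + \<mu> / 2 * (norm (p1 - p2))\<^sup>2 \<le> a1"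
    using a2(2)[of p1] a1(1) by simp
  have "((1 / \<tau>) *\<^sub>R (z1 - p1)) \<bullet> (p2 - p1) + ((1 / \<tau>) *\<^sub>R (z2 - p2)) \<bullet> (p1 - p2) \<le> 0"
  proof -
    have "\<mu> / 2 * (norm (p2 - p1))\<^sup>2 \<ge> 0" "\<mu> / 2 * (norm (p1 - p2))\<^sup>2 \<ge> 0" using mu by simp_all
    then show ?thesis using i1 i2 by linarith
  qed
  then have "(1 / \<tau>) * (((z1 - z2) - (p1 - p2)) \<bullet> (p1 - p2)) \<ge> 0"
    by (simp add: inner_diff_left inner_diff_right inner_commute algebra_simps)
  then have "((z1 - z2) - (p1 - p2)) \<bullet> (p1 - p2) \<ge> 0" using tau by (simp add: zero_le_divide_iff)
  then have "(norm (p1 - p2))\<^sup>2 \<le> (z1 - z2) \<bullet> (p1 - p2)"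
    by (simp add: inner_diff_left power2_norm_eq_inner)
  also have "\<dots> \<le> norm (z1 - z2) * norm (p1 - p2)" by (rule norm_cauchy_schwarz)
  finally have "norm (p1 - p2) * norm (p1 - p2) \<le> norm (z1 - z2) * norm (p1 - p2)"
    by (simp add: power2_eq_square)
  then have "norm (p1 - p2) \<le> norm (z1 - z2)"
    by (cases "norm (p1 - p2) = 0") (auto simp: mult_le_cancel_right)
  then show ?thesis by (simp add: p1_def p2_def)
qed




lemma aux_F2:
  fixes c t w X N :: real
  assumes "c > 0" "t > 0"
  shows "c / t * (w + 2 / c * X + N / c\<^sup>2) + (c - 1) * N / (t * c) = c * w / t + (2 * X + N) / t"
  using assms by (simp add: field_simps power2_eq_square)

locale det =
  fixes f :: "'x::euclidean_space \<Rightarrow> real" and gradf :: "'x \<Rightarrow> 'x" and Lf :: real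
    and h :: "'u::euclidean_space \<Rightarrow> ereal" and K :: "'x \<Rightarrow> 'u" and \<mu> :: real
    and \<gamma> \<tau> \<omega> \<omega>ran \<zeta> :: real and xs :: 'x and us :: 'u
  assumes K_lin: "linear K"
    and f_conv: "convex_on UNIV f"
    and f_grad: "\<And>z. (f has_derivative (\<lambda>d. gradf z \<bullet> d)) (at z)"
    and f_smooth: "Lf-lipschitz_on UNIV gradf"
    and h_proper: "proper_fun h"
    and mu_nonneg: "\<mu> \<ge> 0" and h_strong: "strongly_convex_fun \<mu> (fenchel_conj h)"
    and om_nonneg: "\<omega> \<ge> 0" and omran_nonneg: "\<omega>ran \<ge> 0" and zeta: "0 \<le> \<zeta>" "\<zeta> \<le> 1"
    and gamma: "0 < \<gamma>" "\<gamma> * Lf < 2"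
    and tau: "0 < \<tau>"
    and step: "\<gamma> * \<tau> * ((1 - \<zeta>) * (onorm K)\<^sup>2 + \<omega>ran) \<le> 1"
    and sad1: "0 = gradf xs + adjoint K us"
    and sad2: "K xs \<in> subdiff (fenchel_conj h) us"
begin

abbreviation "hs \<equiv> fenchel_conj h"
definition "P z = prox (\<lambda>v. ereal \<tau> * hs v) z"
definition "xh X U = X - \<gamma> *\<^sub>R gradf X - \<gamma> *\<^sub>R adjoint K U"
definition "rho X U = P (U + \<tau> *\<^sub>R K (xh X U)) - U"
definition "Psi X U = (norm (X - xs))\<^sup>2 / \<gamma> + (1 + \<omega>) / \<tau> * (norm (U - us))\<^sup>2"

lemma Kbl: "bounded_linear K" using K_lin linear_conv_bounded_linear by blast
lemma KTlin: "linear (adjoint K)" using adjoint_linear[OF K_lin] .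
lemma KTbl: "bounded_linear (adjoint K)" using KTlin linear_conv_bounded_linear by blast

lemma adj: "x \<bullet> adjoint K y = K x \<bullet> y" using adjoint_works[OF K_lin] .

lemma norm_KT: "norm (adjoint K v) \<le> onorm K * norm v"
proof -
  have "(norm (adjoint K v))\<^sup>2 = K (adjoint K v) \<bullet> v"
    by (simp add: power2_norm_eq_inner adj)
  also have "\<dots> \<le> norm (K (adjoint K v)) * norm v" by (rule norm_cauchy_schwarz)
  also have "\<dots> \<le> onorm K * norm (adjoint K v) * norm v"
    by (intro mult_right_mono onorm[OF Kbl]) simp
  finally have "norm (adjoint K v) * norm (adjoint K v) \<le> (onorm K * norm v) * norm (adjoint K v)"
    by (simp add: power2_eq_square algebra_simps)
  then show ?thesis
    by (cases "norm (adjoint K v) = 0") (auto simp: mult_le_cancel_right onorm_pos_le[OF Kbl])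
qed

lemma hs_us: obtains bs where "hs us = ereal bs" "\<And>q. ereal (bs + K xs \<bullet> (q - us)) \<le> hs q"
proof -
  have fin: "\<bar>hs us\<bar> \<noteq> \<infinity>" and sub: "\<And>q. hs us + ereal (K xs \<bullet> (q - us)) \<le> hs q"
    using sad2 by (auto simp: subdiff_def)
  obtain bs where bs: "hs us = ereal bs" using fin by (cases "hs us") auto
  show ?thesis using that[OF bs] sub bs by simp
qed

lemma hs_us_fin: "hs us \<noteq> \<infinity>"
proof -
  obtain bs where "hs us = ereal bs" using hs_us by blast
  then show ?thesis by simp
qed

lemma P_subgrad:
  obtains a where "hs (P z) = ereal a"
    "\<And>q. ereal (a + ((1 / \<tau>) *\<^sub>R (z - P z)) \<bullet> (q - P z) + \<mu> / 2 * (norm (q - P z))\<^sup>2) \<le> hs q"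
  using prox_subgrad[OF h_proper tau hs_us_fin h_strong mu_nonneg, of z] unfolding P_def by blast

lemma P_nonexp: "norm (P z1 - P z2) \<le> norm (z1 - z2)"
  unfolding P_def by (rule prox_nonexp[OF h_proper tau hs_us_fin h_strong mu_nonneg])

lemma mono_step:
  fixes z :: 'u and g :: 'u
  assumes "z = U + \<tau> *\<^sub>R g"
  shows "((1 / \<tau>) *\<^sub>R (U - P z) + g - K xs) \<bullet> (P z - us) \<ge> \<mu> / 2 * (norm (P z - us))\<^sup>2"
proof -
  obtain a where a: "hs (P z) = ereal a"
    "\<And>q. ereal (a + ((1 / \<tau>) *\<^sub>R (z - P z)) \<bullet> (q - P z) + \<mu> / 2 * (norm (q - P z))\<^sup>2) \<le> hs q"
    using P_subgrad by blast
  obtain bs where bs: "hs us = ereal bs" "\<And>q. ereal (bs + K xs \<bullet> (q - us)) \<le> hs q" using hs_us by blast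
  have i1: "a + ((1 / \<tau>) *\<^sub>R (z - P z)) \<bullet> (us - P z) + \<mu> / 2 * (norm (us - P z))\<^sup>2 \<le> bs"
    using a(2)[of us] bs(1) by simp
  have i2: "bs + K xs \<bullet> (P z - us) \<le> a" using bs(2)[of "P z"] a(1) by simp
  have e: "(1 / \<tau>) *\<^sub>R (z - P z) = (1 / \<tau>) *\<^sub>R (U - P z) + g"
    using tau unfolding assms by (simp add: algebra_simps)
  define G where "G = (1 / \<tau>) *\<^sub>R (z - P z)"
  define D where "D = P z - us"
  have n: "norm (us - P z) = norm D" unfolding D_def by (rule norm_minus_commute)
  have m: "G \<bullet> (us - P z) = - (G \<bullet> D)" unfolding D_def by (simp add: inner_diff_right)
  have i1': "a - G \<bullet> D + \<mu> / 2 * (norm D)\<^sup>2 \<le> bs" using i1 unfolding G_def[symmetric] m n by simp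
  have i2': "bs + K xs \<bullet> D \<le> a" using i2 unfolding D_def .
  have "((1 / \<tau>) *\<^sub>R (U - P z) + g - K xs) \<bullet> D = G \<bullet> D - K xs \<bullet> D"
    unfolding G_def e by (simp add: inner_diff_left)
  then show ?thesis using i1' i2' unfolding D_def[symmetric] by linarith
qed

lemma gradf_xs: "gradf xs = - adjoint K us" using sad1 by (simp add: eq_neg_iff_add_eq_0)

lemma det_lyap:
  fixes X :: 'x and U :: 'u
  defines "\<rho> \<equiv> rho X U"
  shows "(norm (xh X U - \<gamma> *\<^sub>R adjoint K \<rho> - xs))\<^sup>2 / \<gamma>
       + (1 + \<omega>) / \<tau> * (norm (U - us + (1 / (1 + \<omega>)) *\<^sub>R \<rho>))\<^sup>2
       + (\<gamma> * \<omega>ran * (norm \<rho>)\<^sup>2 - \<gamma> * \<zeta> * (norm (adjoint K \<rho>))\<^sup>2)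
       + \<omega> * (norm \<rho>)\<^sup>2 / (\<tau> * (1 + \<omega>))
       + \<gamma> * (norm (adjoint K (U - us)))\<^sup>2 + \<mu> * (norm (U + \<rho> - us))\<^sup>2
     \<le> Psi X U"
proof -
  define z where "z = U + \<tau> *\<^sub>R K (xh X U)"
  define W where "W = U - us"
  define D where "D = U + \<rho> - us"
  define a where "a = (X - xs) - \<gamma> *\<^sub>R (gradf X - gradf xs)"
  have Pz: "P z = U + \<rho>" unfolding \<rho>_def rho_def z_def by simp
  have rD: "\<rho> = D - W" unfolding D_def W_def by simp
  have xhx: "xh X U - xs = a - \<gamma> *\<^sub>R adjoint K W"
    unfolding xh_def a_def W_def gradf_xs using linear_diff[OF KTlin]
    by (simp add: algebra_simps linear_diff[OF KTlin] scaleR_diff_right)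
  have Aeq: "xh X U - \<gamma> *\<^sub>R adjoint K \<rho> - xs = a - \<gamma> *\<^sub>R adjoint K D"
  proof -
    have "adjoint K D = adjoint K W + adjoint K \<rho>"
      unfolding rD using linear_diff[OF KTlin] by (simp add: linear_diff[OF KTlin])
    then show ?thesis using xhx by (simp add: algebra_simps)
  qed
  have mono: "((1 / \<tau>) *\<^sub>R (U - P z) + K (xh X U) - K xs) \<bullet> (P z - us) \<ge> \<mu> / 2 * (norm (P z - us))\<^sup>2"
    by (rule mono_step) (simp add: z_def)
  have KxhKx: "K (xh X U) - K xs = K a - \<gamma> *\<^sub>R K (adjoint K W)"
    using xhx by (metis K_lin linear_diff linear_scale)
  define p where "p = a \<bullet> adjoint K D"
  define k1 where "k1 = (norm (adjoint K D))\<^sup>2"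
  define k2 where "k2 = (norm (adjoint K W))\<^sup>2"
  define k12 where "k12 = adjoint K W \<bullet> adjoint K D"
  define d where "d = (norm D)\<^sup>2"
  define w where "w = (norm W)\<^sup>2"
  define wd where "wd = W \<bullet> D"
  have mono': "- ((d - wd) / \<tau>) + p - \<gamma> * k12 \<ge> \<mu> / 2 * d"
  proof -
    have "((1 / \<tau>) *\<^sub>R (U - P z) + K (xh X U) - K xs) \<bullet> (P z - us)
        = (1 / \<tau>) * ((U - P z) \<bullet> D) + K a \<bullet> D - \<gamma> * (K (adjoint K W) \<bullet> D)"
      unfolding Pz add_diff_eq[symmetric] KxhKx
      by (simp add: inner_add_left inner_diff_left D_def algebra_simps)
    also have "(U - P z) \<bullet> D = - (d - wd)"
      unfolding Pz d_def wd_def D_def W_def power2_norm_eq_inner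
      by (simp add: inner_diff_left inner_diff_right inner_add_left inner_add_right inner_commute)
    also have "K a \<bullet> D = p" unfolding p_def adj ..
    also have "K (adjoint K W) \<bullet> D = k12" unfolding k12_def adj ..
    finally have E: "((1 / \<tau>) *\<^sub>R (U - P z) + K (xh X U) - K xs) \<bullet> (P z - us)
        = (1 / \<tau>) * (- (d - wd)) + p - \<gamma> * k12" .
    have "(1 / \<tau>) * (- (d - wd)) = - ((d - wd) / \<tau>)" by (simp add: minus_divide_left)
    then show ?thesis using mono E unfolding Pz D_def[symmetric] d_def[symmetric] by linarith
  qed
  have F1: "(norm (a - \<gamma> *\<^sub>R adjoint K D))\<^sup>2 / \<gamma> = (norm a)\<^sup>2 / \<gamma> - 2 * p + \<gamma> * k1"
  proof -
    have "(norm (a - \<gamma> *\<^sub>R adjoint K D))\<^sup>2 = (norm a)\<^sup>2 - 2 * \<gamma> * p + \<gamma> * \<gamma> * k1"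
      unfolding p_def k1_def power2_norm_eq_inner
      by (simp add: inner_diff_left inner_diff_right inner_commute algebra_simps)
    then show ?thesis using gamma by (simp add: field_simps)
  qed
  have na: "(norm a)\<^sup>2 \<le> (norm (X - xs))\<^sup>2"
    unfolding a_def
    by (rule grad_step_nonexp[OF f_conv f_grad f_smooth gamma(1)]) (use gamma in linarith)
  have F2: "(1 + \<omega>) / \<tau> * (norm (W + (1 / (1 + \<omega>)) *\<^sub>R \<rho>))\<^sup>2 + \<omega> * (norm \<rho>)\<^sup>2 / (\<tau> * (1 + \<omega>))
      = (1 + \<omega>) * w / \<tau> + (d - w) / \<tau>"
  proof -
    have o: "1 + \<omega> > 0" using om_nonneg by simp
    have e1: "(norm (W + (1 / (1 + \<omega>)) *\<^sub>R \<rho>))\<^sup>2 = w + 2 / (1 + \<omega>) * (W \<bullet> \<rho>) + (norm \<rho>)\<^sup>2 / (1 + \<omega>)\<^sup>2"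
      unfolding w_def power2_norm_eq_inner
      by (simp add: inner_add_left inner_add_right inner_commute power2_eq_square algebra_simps)
    have e2: "2 * (W \<bullet> \<rho>) + (norm \<rho>)\<^sup>2 = d - w"
      unfolding rD d_def w_def power2_norm_eq_inner
      by (simp add: inner_diff_left inner_diff_right inner_commute algebra_simps)
    have "(1 + \<omega>) / \<tau> * (w + 2 / (1 + \<omega>) * (W \<bullet> \<rho>) + (norm \<rho>)\<^sup>2 / (1 + \<omega>)\<^sup>2) + \<omega> * (norm \<rho>)\<^sup>2 / (\<tau> * (1 + \<omega>))
        = (1 + \<omega>) * w / \<tau> + (2 * (W \<bullet> \<rho>) + (norm \<rho>)\<^sup>2) / \<tau>"
      using aux_F2[OF o tau, of w "W \<bullet> \<rho>" "(norm \<rho>)\<^sup>2"] by simp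
    then show ?thesis unfolding e1 e2 .
  qed
  have nr: "(norm \<rho>)\<^sup>2 / \<tau> = d / \<tau> - 2 * (wd / \<tau>) + w / \<tau>"
  proof -
    have "(norm \<rho>)\<^sup>2 = d - 2 * wd + w"
      unfolding rD d_def w_def wd_def power2_norm_eq_inner
      by (simp add: inner_diff_left inner_diff_right inner_commute algebra_simps)
    then have "(norm \<rho>)\<^sup>2 / \<tau> = (d - 2 * wd + w) / \<tau>" by simp
    also have "\<dots> = d / \<tau> - 2 * (wd / \<tau>) + w / \<tau>" by (simp add: add_divide_distrib diff_divide_distrib)
    finally show ?thesis .
  qed
  have kr: "\<gamma> * (norm (adjoint K \<rho>))\<^sup>2 = \<gamma> * k1 - 2 * (\<gamma> * k12) + \<gamma> * k2"
  proof -
    have e: "adjoint K \<rho> = adjoint K D - adjoint K W" unfolding rD by (rule linear_diff[OF KTlin])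
    have "(norm (adjoint K \<rho>))\<^sup>2 = k1 - 2 * k12 + k2"
      unfolding e k1_def k2_def k12_def power2_norm_eq_inner
      by (simp add: inner_diff_left inner_diff_right inner_commute algebra_simps)
    then show ?thesis by (simp add: right_diff_distrib distrib_left)
  qed
  have noise: "\<gamma> * \<omega>ran * (norm \<rho>)\<^sup>2 - \<gamma> * \<zeta> * (norm (adjoint K \<rho>))\<^sup>2
      \<le> (norm \<rho>)\<^sup>2 / \<tau> - \<gamma> * (norm (adjoint K \<rho>))\<^sup>2"
  proof -
    have "(norm (adjoint K \<rho>))\<^sup>2 \<le> (onorm K * norm \<rho>)\<^sup>2"
      using norm_KT[of \<rho>] by (simp add: power_mono)
    then have k: "(norm (adjoint K \<rho>))\<^sup>2 \<le> (onorm K)\<^sup>2 * (norm \<rho>)\<^sup>2" by (simp add: power_mult_distrib)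
    have "\<gamma> * (1 - \<zeta>) * (norm (adjoint K \<rho>))\<^sup>2 \<le> \<gamma> * (1 - \<zeta>) * ((onorm K)\<^sup>2 * (norm \<rho>)\<^sup>2)"
      using k gamma zeta by (intro mult_left_mono) auto
    moreover have "\<gamma> * ((1 - \<zeta>) * (onorm K)\<^sup>2 + \<omega>ran) * (norm \<rho>)\<^sup>2 \<le> (norm \<rho>)\<^sup>2 / \<tau>"
    proof -
      have "\<gamma> * ((1 - \<zeta>) * (onorm K)\<^sup>2 + \<omega>ran) \<le> 1 / \<tau>"
        using step tau by (simp add: field_simps mult.commute mult.left_commute)
      then show ?thesis by (metis mult_right_mono zero_le_power2 divide_inverse mult_1 mult.commute)
    qed
    ultimately show ?thesis by (simp add: algebra_simps)
  qed
  have Psi_eq: "Psi X U = (norm (X - xs))\<^sup>2 / \<gamma> + (1 + \<omega>) * w / \<tau>"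
    unfolding Psi_def w_def W_def by simp
  have f1: "(norm (xh X U - \<gamma> *\<^sub>R adjoint K \<rho> - xs))\<^sup>2 / \<gamma> = (norm a)\<^sup>2 / \<gamma> - 2 * p + \<gamma> * k1"
    unfolding Aeq F1 ..
  have f2: "(1 + \<omega>) / \<tau> * (norm (U - us + (1 / (1 + \<omega>)) *\<^sub>R \<rho>))\<^sup>2 + \<omega> * (norm \<rho>)\<^sup>2 / (\<tau> * (1 + \<omega>))
      = (1 + \<omega>) * w / \<tau> + (d / \<tau> - w / \<tau>)"
    using F2 unfolding W_def by (simp add: diff_divide_distrib)
  have f7: "\<gamma> * (norm (adjoint K (U - us)))\<^sup>2 = \<gamma> * k2" unfolding k2_def W_def ..
  have f8: "\<mu> * (norm (U + \<rho> - us))\<^sup>2 = 2 * (\<mu> / 2 * d)" unfolding d_def D_def by simp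
  have dt: "(d - wd) / \<tau> = d / \<tau> - wd / \<tau>" by (simp add: diff_divide_distrib)
  have f9: "(norm a)\<^sup>2 / \<gamma> \<le> (norm (X - xs))\<^sup>2 / \<gamma>" using na gamma by (simp add: divide_right_mono)
  show ?thesis
    unfolding Psi_eq
    using f1 f2 noise nr kr mono' f7 f8 dt f9 by linarith
qed

end



lemma lambda_min_pos_inj:
  fixes K :: "'x::euclidean_space \<Rightarrow> 'u::euclidean_space"
  assumes K_lin: "linear K" and lam: "lambda_min (K \<circ> adjoint K) > 0" and w: "adjoint K w = 0"
  shows "w = 0"
proof (rule ccontr)
  assume "w \<noteq> 0"
  define E where "E = {l. \<exists>v. v \<noteq> 0 \<and> (K \<circ> adjoint K) v = l *\<^sub>R v}"
  have K0: "K 0 = 0" using K_lin by (rule linear_0)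
  have "0 \<in> E" unfolding E_def using \<open>w \<noteq> 0\<close> w K0 by (intro CollectI exI[of _ w]) simp
  moreover have "bdd_below E"
  proof (rule bdd_belowI[of _ 0])
    fix l assume "l \<in> E"
    then obtain v where v: "v \<noteq> 0" "K (adjoint K v) = l *\<^sub>R v" by (auto simp: E_def)
    have "(norm (adjoint K v))\<^sup>2 = K (adjoint K v) \<bullet> v"
      by (simp add: power2_norm_eq_inner adjoint_works[OF K_lin])
    also have "\<dots> = l * (norm v)\<^sup>2" by (simp add: v power2_norm_eq_inner)
    finally have "0 \<le> l * (norm v)\<^sup>2" by (metis zero_le_power2)
    then show "0 \<le> l" using v by (simp add: zero_le_mult_iff)
  qed
  ultimately have "Inf E \<le> 0" by (rule cInf_lower)
  then show False using lam by (simp add: lambda_min_def E_def)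
qed

lemma lambda_min_pos_bound:
  fixes K :: "'x::euclidean_space \<Rightarrow> 'u::euclidean_space"
  assumes K_lin: "linear K" and lam: "lambda_min (K \<circ> adjoint K) > 0"
  obtains c where "c > 0" "\<And>w. c * norm w \<le> norm (adjoint K w)"
proof -
  have inj: "inj (adjoint K)"
  proof (rule injI)
    fix x y assume "adjoint K x = adjoint K y"
    then have "adjoint K (x - y) = 0" by (simp add: linear_diff[OF adjoint_linear[OF K_lin]])
    then have "x - y = 0" by (rule lambda_min_pos_inj[OF K_lin lam])
    then show "x = y" by simp
  qed
  show ?thesis using linear_inj_bounded_below_pos[OF adjoint_linear[OF K_lin] inj] that by blast
qed

context det begin

definition "Dual v = fenchel_conj (\<lambda>z. ereal (f z)) (- adjoint K v) + hs v"

lemma Dual_lower: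
  obtains C where "Dual us = ereal C"
    "\<And>v. ereal (C + (norm (adjoint K (v - us)))\<^sup>2 / (2 * (Lf + 1)) + \<mu> / 2 * (norm (v - us))\<^sup>2) \<le> Dual v"
proof -
  obtain bs where bs: "hs us = ereal bs" "\<And>q. ereal (bs + K xs \<bullet> (q - us)) \<le> hs q" using hs_us by blast
  define C where "C = gradf xs \<bullet> xs - f xs + bs"
  have fus: "fenchel_conj (\<lambda>z. ereal (f z)) (- adjoint K us) = ereal (gradf xs \<bullet> xs - f xs)"
    using fc_f_at_grad[OF f_conv f_grad f_smooth, of xs] by (simp add: gradf_xs)
  have "Dual us = ereal C" unfolding Dual_def fus bs(1) C_def by simp
  moreover have "ereal (C + (norm (adjoint K (v - us)))\<^sup>2 / (2 * (Lf + 1)) + \<mu> / 2 * (norm (v - us))\<^sup>2) \<le> Dual v" for v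
  proof -
    have a1: "ereal ((- adjoint K v) \<bullet> xs - f xs + (norm (- adjoint K v - gradf xs))\<^sup>2 / (2 * (Lf + 1)))
        \<le> fenchel_conj (\<lambda>z. ereal (f z)) (- adjoint K v)"
      by (rule fc_f_strong[OF f_grad f_smooth])
    have a2: "ereal (bs + K xs \<bullet> (v - us) + \<mu> / 2 * (norm (v - us))\<^sup>2) \<le> hs v"
      by (rule sc_strengthen[OF h_strong bs(1) bs(2)])
    have n: "norm (- adjoint K v - gradf xs) = norm (adjoint K (v - us))"
    proof -
      have "- adjoint K v - gradf xs = - adjoint K (v - us)"
        by (simp add: gradf_xs linear_diff[OF KTlin])
      then show ?thesis by simp
    qed
    have i: "(- adjoint K v) \<bullet> xs + K xs \<bullet> (v - us) = gradf xs \<bullet> xs"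
      by (simp add: gradf_xs inner_commute adj inner_diff_right)
    have "ereal (C + (norm (adjoint K (v - us)))\<^sup>2 / (2 * (Lf + 1)) + \<mu> / 2 * (norm (v - us))\<^sup>2)
       = ereal ((- adjoint K v) \<bullet> xs - f xs + (norm (- adjoint K v - gradf xs))\<^sup>2 / (2 * (Lf + 1)))
         + ereal (bs + K xs \<bullet> (v - us) + \<mu> / 2 * (norm (v - us))\<^sup>2)"
      unfolding n C_def using i by simp
    also have "\<dots> \<le> Dual v" unfolding Dual_def by (rule add_mono[OF a1 a2])
    finally show ?thesis .
  qed
  ultimately show ?thesis using that by blast
qed

lemma dual_unique:
  assumes nondeg: "lambda_min (K \<circ> adjoint K) > 0 \<or> \<mu> > 0"
  shows "(\<forall>v'. Dual v \<le> Dual v') \<longleftrightarrow> v = us"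
proof -
  obtain C where C: "Dual us = ereal C"
    "\<And>v. ereal (C + (norm (adjoint K (v - us)))\<^sup>2 / (2 * (Lf + 1)) + \<mu> / 2 * (norm (v - us))\<^sup>2) \<le> Dual v"
    using Dual_lower by blast
  have Lf: "Lf \<ge> 0" using f_smooth by (auto simp: lipschitz_on_def)
  have nn: "0 \<le> (norm (adjoint K (v - us)))\<^sup>2 / (2 * (Lf + 1)) + \<mu> / 2 * (norm (v - us))\<^sup>2" for v
    using Lf mu_nonneg by (intro add_nonneg_nonneg) auto
  show ?thesis
  proof
    assume min: "\<forall>v'. Dual v \<le> Dual v'"
    have "ereal (C + ((norm (adjoint K (v - us)))\<^sup>2 / (2 * (Lf + 1)) + \<mu> / 2 * (norm (v - us))\<^sup>2)) \<le> ereal C"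
      using C(2)[of v] min C(1) by (metis add.assoc order_trans)
    then have z: "(norm (adjoint K (v - us)))\<^sup>2 / (2 * (Lf + 1)) + \<mu> / 2 * (norm (v - us))\<^sup>2 \<le> 0" by simp
    have z1: "(norm (adjoint K (v - us)))\<^sup>2 / (2 * (Lf + 1)) \<ge> 0" using Lf by simp
    have z2: "\<mu> / 2 * (norm (v - us))\<^sup>2 \<ge> 0" using mu_nonneg by simp
    from nondeg show "v = us"
    proof
      assume lam: "lambda_min (K \<circ> adjoint K) > 0"
      have "(norm (adjoint K (v - us)))\<^sup>2 / (2 * (Lf + 1)) = 0" using z z1 z2 by linarith
      then have "adjoint K (v - us) = 0" using Lf by simp
      then have "v - us = 0" by (rule lambda_min_pos_inj[OF K_lin lam])
      then show "v = us" by simp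
    next
      assume mu: "\<mu> > 0"
      have "\<mu> / 2 * (norm (v - us))\<^sup>2 = 0" using z z1 z2 by linarith
      then show "v = us" using mu by simp
    qed
  next
    assume "v = us"
    show "\<forall>v'. Dual v \<le> Dual v'"
    proof
      fix v'
      have "ereal C \<le> ereal (C + (norm (adjoint K (v' - us)))\<^sup>2 / (2 * (Lf + 1)) + \<mu> / 2 * (norm (v' - us))\<^sup>2)"
        using nn[of v'] by simp
      then show "Dual v \<le> Dual v'" using C \<open>v = us\<close> by (metis order_trans)
    qed
  qed
qed

end



definition L2 :: "'w measure \<Rightarrow> ('w \<Rightarrow> 'a::euclidean_space) \<Rightarrow> bool" where
  "L2 M Z \<longleftrightarrow> Z \<in> borel_measurable M \<and> integrable M (\<lambda>w. (norm (Z w))\<^sup>2)"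

lemma L2_meas: "L2 M Z \<Longrightarrow> Z \<in> borel_measurable M" by (simp add: L2_def)
lemma L2_int: "L2 M Z \<Longrightarrow> integrable M (\<lambda>w. (norm (Z w))\<^sup>2)" by (simp add: L2_def)

lemma L2_bound:
  fixes Z :: "'w \<Rightarrow> 'a::euclidean_space" and Y :: "'w \<Rightarrow> 'b::euclidean_space"
  assumes Y: "L2 M Y" and Zm: "Z \<in> borel_measurable M" and b: "\<And>w. norm (Z w) \<le> c * norm (Y w)"
  shows "L2 M Z"
proof -
  note Zm[measurable]
  have i: "integrable M (\<lambda>w. c\<^sup>2 * (norm (Y w))\<^sup>2)" using L2_int[OF Y] by simp
  have bd: "norm ((norm (Z w))\<^sup>2) \<le> norm (c\<^sup>2 * (norm (Y w))\<^sup>2)" for w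
  proof -
    have "(norm (Z w))\<^sup>2 \<le> (c * norm (Y w))\<^sup>2" using b[of w] by (simp add: power_mono)
    then show ?thesis by (simp add: power_mult_distrib)
  qed
  have "integrable M (\<lambda>w. (norm (Z w))\<^sup>2)"
    by (rule Bochner_Integration.integrable_bound[OF i _ AE_I2[OF bd]]) measurable
  then show ?thesis using Zm by (simp add: L2_def)
qed

lemma L2_add:
  fixes Y Z :: "'w \<Rightarrow> 'a::euclidean_space"
  assumes Y: "L2 M Y" and Z: "L2 M Z"
  shows "L2 M (\<lambda>w. Y w + Z w)"
proof -
  have m[measurable]: "Y \<in> borel_measurable M" "Z \<in> borel_measurable M" using Y Z by (auto simp: L2_def)
  have i: "integrable M (\<lambda>w. 2 * (norm (Y w))\<^sup>2 + 2 * (norm (Z w))\<^sup>2)"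
    using L2_int[OF Y] L2_int[OF Z] by simp
  have bd: "norm ((norm (Y w + Z w))\<^sup>2) \<le> norm (2 * (norm (Y w))\<^sup>2 + 2 * (norm (Z w))\<^sup>2)" for w
  proof -
    have "norm (Y w + Z w) \<le> norm (Y w) + norm (Z w)" by (rule norm_triangle_ineq)
    then have "(norm (Y w + Z w))\<^sup>2 \<le> (norm (Y w) + norm (Z w))\<^sup>2" by (simp add: power_mono)
    also have "\<dots> \<le> 2 * (norm (Y w))\<^sup>2 + 2 * (norm (Z w))\<^sup>2"
      using sum_squares_bound[of "norm (Y w)" "norm (Z w)"]
      by (simp add: power2_eq_square algebra_simps)
    finally show ?thesis by simp
  qed
  have "integrable M (\<lambda>w. (norm (Y w + Z w))\<^sup>2)"
    by (rule Bochner_Integration.integrable_bound[OF i _ AE_I2[OF bd]]) measurable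
  then show ?thesis by (simp add: L2_def)
qed

lemma L2_scale:
  fixes Z :: "'w \<Rightarrow> 'a::euclidean_space"
  assumes Z: "L2 M Z"
  shows "L2 M (\<lambda>w. c *\<^sub>R Z w)"
  by (rule L2_bound[OF Z, of _ "\<bar>c\<bar>"]) (use L2_meas[OF Z] in auto)

lemma L2_minus:
  fixes Z :: "'w \<Rightarrow> 'a::euclidean_space"
  assumes Z: "L2 M Z"
  shows "L2 M (\<lambda>w. - Z w)"
  using L2_scale[OF Z, of "-1"] by simp

lemma L2_diff:
  fixes Y Z :: "'w \<Rightarrow> 'a::euclidean_space"
  assumes Y: "L2 M Y" and Z: "L2 M Z"
  shows "L2 M (\<lambda>w. Y w - Z w)"
  using L2_add[OF Y L2_minus[OF Z]] by simp

lemma L2_lin: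
  fixes Z :: "'w \<Rightarrow> 'a::euclidean_space" and T :: "'a \<Rightarrow> 'b::euclidean_space"
  assumes Z: "L2 M Z" and T: "linear T"
  shows "L2 M (\<lambda>w. T (Z w))"
proof -
  have bl: "bounded_linear T" using T linear_conv_bounded_linear by blast
  have "T \<in> borel_measurable borel"
    by (intro borel_measurable_continuous_onI linear_continuous_on bl)
  then have "(\<lambda>w. T (Z w)) \<in> borel_measurable M" using L2_meas[OF Z] by measurable
  then show ?thesis by (rule L2_bound[OF Z _ onorm[OF bl]])
qed

lemma L2_const:
  fixes c :: "'a::euclidean_space"
  assumes "finite_measure M"
  shows "L2 M (\<lambda>w. c)"
  using assms by (simp add: L2_def finite_measure.integrable_const)

lemma L2_inner:
  fixes Y Z :: "'w \<Rightarrow> 'a::euclidean_space"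
  assumes Y: "L2 M Y" and Z: "L2 M Z"
  shows "integrable M (\<lambda>w. Y w \<bullet> Z w)"
proof -
  have m[measurable]: "Y \<in> borel_measurable M" "Z \<in> borel_measurable M" using Y Z by (auto simp: L2_def)
  have i: "integrable M (\<lambda>w. (norm (Y w))\<^sup>2 + (norm (Z w))\<^sup>2)"
    using L2_int[OF Y] L2_int[OF Z] by simp
  have bd: "norm (Y w \<bullet> Z w) \<le> norm ((norm (Y w))\<^sup>2 + (norm (Z w))\<^sup>2)" for w
  proof -
    have "\<bar>Y w \<bullet> Z w\<bar> \<le> norm (Y w) * norm (Z w)" by (rule Cauchy_Schwarz_ineq2)
    also have "\<dots> \<le> (norm (Y w))\<^sup>2 + (norm (Z w))\<^sup>2"
    proof -
      have "2 * norm (Y w) * norm (Z w) \<le> (norm (Y w))\<^sup>2 + (norm (Z w))\<^sup>2" by (rule sum_squares_bound)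
      moreover have "0 \<le> norm (Y w) * norm (Z w)" by simp
      ultimately show ?thesis by linarith
    qed
    finally show ?thesis by simp
  qed
  show ?thesis by (rule Bochner_Integration.integrable_bound[OF i _ AE_I2[OF bd]]) measurable
qed




locale stoch = det f gradf Lf h K \<mu> \<gamma> \<tau> \<omega> \<omega>ran \<zeta> xs us
  for f :: "'x::euclidean_space \<Rightarrow> real" and gradf :: "'x \<Rightarrow> 'x" and Lf :: real
    and h :: "'u::euclidean_space \<Rightarrow> ereal" and K :: "'x \<Rightarrow> 'u" and \<mu> :: real
    and \<gamma> \<tau> \<omega> \<omega>ran \<zeta> :: real and xs :: 'x and us :: 'u +
  fixes M :: "'w measure"
    and x0 :: 'x and u0 :: 'u
    and x xhat :: "nat \<Rightarrow> 'w \<Rightarrow> 'x" and u r Rr :: "nat \<Rightarrow> 'w \<Rightarrow> 'u"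
    and F :: "nat \<Rightarrow> 'w measure"
  assumes prob: "prob_space M"
    and x_0: "\<And>w. x 0 w = x0" and u_0: "\<And>w. u 0 w = u0"
    and xhat_eq: "\<And>t w. xhat t w = x t w - \<gamma> *\<^sub>R gradf (x t w) - \<gamma> *\<^sub>R adjoint K (u t w)"
    and r_eq: "\<And>t w. r t w = prox (\<lambda>v. ereal \<tau> * fenchel_conj h v) (u t w + \<tau> *\<^sub>R K (xhat t w)) - u t w"
    and u_step: "\<And>t w. u (Suc t) w = u t w + (1 / (1 + \<omega>)) *\<^sub>R Rr t w"
    and x_step: "\<And>t w. x (Suc t) w = xhat t w - (\<gamma> * (1 + \<omega>)) *\<^sub>R
                                       (adjoint K (u (Suc t) w) - adjoint K (u t w))"
    and F_eq: "\<And>t. F t = sigma (space M)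
                  (\<Union>s\<in>{..t}. {(\<lambda>w. (x s w, u s w)) -` A \<inter> space M | A. A \<in> sets borel})"
    and Rr_meas: "\<And>t. Rr t \<in> borel_measurable M"
    and unbiased: "\<And>t b. b \<in> Basis \<Longrightarrow>
        AE w in M. real_cond_exp M (F t) (\<lambda>w. Rr t w \<bullet> b) w = r t w \<bullet> b"
    and var1: "\<And>t. AE w in M.
        nn_cond_exp M (F t) (\<lambda>w. ennreal ((norm (Rr t w - r t w))\<^sup>2)) w
          \<le> ennreal (\<omega> * (norm (r t w))\<^sup>2)"
    and var2: "\<And>t. AE w in M.
        nn_cond_exp M (F t) (\<lambda>w. ennreal ((norm (adjoint K (Rr t w - r t w)))\<^sup>2)) w
          + ennreal (\<zeta> * (norm (adjoint K (r t w)))\<^sup>2)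
          \<le> ennreal (\<omega>ran * (norm (r t w))\<^sup>2)"
begin

lemma xhat_xh: "xhat t w = xh (x t w) (u t w)" unfolding xhat_eq xh_def ..
lemma r_rho: "r t w = rho (x t w) (u t w)" unfolding r_eq rho_def P_def xhat_xh ..

lemma gradf_meas[measurable]: "gradf \<in> borel_measurable borel"
  by (intro borel_measurable_continuous_onI lipschitz_on_continuous_on[OF f_smooth])

lemma P_meas[measurable]: "P \<in> borel_measurable borel"
proof -
  have "1-lipschitz_on UNIV P" by (rule lipschitz_onI) (auto simp: dist_norm P_nonexp)
  then show ?thesis by (intro borel_measurable_continuous_onI lipschitz_on_continuous_on)
qed

lemma K_meas[measurable]: "K \<in> borel_measurable borel"
  by (intro borel_measurable_continuous_onI linear_continuous_on Kbl)

lemma KT_meas[measurable]: "adjoint K \<in> borel_measurable borel"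
  by (intro borel_measurable_continuous_onI linear_continuous_on KTbl)

lemma xh_meas[measurable]:
  assumes [measurable]: "X \<in> borel_measurable N" "U \<in> borel_measurable N"
  shows "(\<lambda>w. xh (X w) (U w)) \<in> borel_measurable N"
  unfolding xh_def by measurable

lemma rho_meas[measurable]:
  assumes [measurable]: "X \<in> borel_measurable N" "U \<in> borel_measurable N"
  shows "(\<lambda>w. rho (X w) (U w)) \<in> borel_measurable N"
  unfolding rho_def by measurable

lemma meas_xu: "x t \<in> borel_measurable M \<and> u t \<in> borel_measurable M"
proof (induction t)
  case 0 then show ?case by (simp add: x_0[abs_def] u_0[abs_def])
next
  case (Suc t)
  then have [measurable]: "x t \<in> borel_measurable M" "u t \<in> borel_measurable M" by auto
  have [measurable]: "Rr t \<in> borel_measurable M" by (rule Rr_meas)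
  have u1[measurable]: "u (Suc t) \<in> borel_measurable M" unfolding u_step[abs_def] by measurable
  have "x (Suc t) \<in> borel_measurable M" unfolding x_step[abs_def] xhat_xh by measurable
  with u1 show ?case by simp
qed

lemma x_meas[measurable]: "x t \<in> borel_measurable M" using meas_xu by blast
lemma u_meas[measurable]: "u t \<in> borel_measurable M" using meas_xu by blast
lemma r_meas[measurable]: "r t \<in> borel_measurable M" unfolding r_rho[abs_def] by measurable

definition "Gen t = (\<Union>s\<in>{..t}. {(\<lambda>w. (x s w, u s w)) -` A \<inter> space M | A. A \<in> sets borel})"

lemma Gen_sub: "Gen t \<subseteq> sets M"
proof -
  have "(\<lambda>w. (x s w, u s w)) -` A \<inter> space M \<in> sets M" if "A \<in> sets borel" for s A
  proof -
    have "(\<lambda>w. (x s w, u s w)) \<in> borel_measurable M" by measurable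
    then show ?thesis using that by (rule measurable_sets)
  qed
  then show ?thesis unfolding Gen_def by auto
qed

lemma Gen_pow: "Gen t \<subseteq> Pow (space M)" using Gen_sub sets.sets_into_space by blast

lemma F_sets: "sets (F t) = sigma_sets (space M) (Gen t)"
  unfolding F_eq Gen_def[symmetric] using Gen_pow by simp
lemma F_space: "space (F t) = space M"
  unfolding F_eq Gen_def[symmetric] using Gen_pow by simp

lemma subalg: "subalgebra M (F t)"
  unfolding subalgebra_def F_space F_sets
  using Gen_sub by (simp add: sets.sigma_sets_subset)

lemma sfs: "sigma_finite_subalgebra M (F t)"
proof -
  interpret prob_space M by (rule prob)
  have "finite_measure_subalgebra M (F t)"
    by unfold_locales (rule subalg)
  then show ?thesis by (rule finite_measure_subalgebra_is_sigma_finite)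
qed

lemma pair_Fmeas: "(\<lambda>w. (x t w, u t w)) \<in> borel_measurable (F t)"
proof (rule measurableI)
  fix A :: "('x \<times> 'u) set" assume "A \<in> sets borel"
  then have "(\<lambda>w. (x t w, u t w)) -` A \<inter> space M \<in> Gen t" unfolding Gen_def by blast
  then show "(\<lambda>w. (x t w, u t w)) -` A \<inter> space (F t) \<in> sets (F t)"
    unfolding F_space F_sets by (rule sigma_sets.Basic)
qed simp

lemma x_Fmeas: "x t \<in> borel_measurable (F t)"
proof -
  have "fst \<in> borel_measurable (borel :: ('x \<times> 'u) measure)"
    by (intro borel_measurable_continuous_onI continuous_on_fst continuous_on_id)
  from measurable_compose[OF pair_Fmeas this] show ?thesis by (simp add: comp_def)
qed

lemma u_Fmeas: "u t \<in> borel_measurable (F t)"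
proof -
  have "snd \<in> borel_measurable (borel :: ('x \<times> 'u) measure)"
    by (intro borel_measurable_continuous_onI continuous_on_snd continuous_on_id)
  from measurable_compose[OF pair_Fmeas this] show ?thesis by (simp add: comp_def)
qed

end



context stoch begin

abbreviation "e t w \<equiv> Rr t w - r t w"

lemma e_meas[measurable]: "(\<lambda>w. e t w) \<in> borel_measurable M"
  using Rr_meas[of t] by measurable

lemma cross_zero:
  fixes Y :: "'w \<Rightarrow> 'u"
  assumes YF: "Y \<in> borel_measurable (F t)" and Y: "L2 M Y" and rL: "L2 M (r t)" and eL: "L2 M (e t)"
  shows "integrable M (\<lambda>w. Y w \<bullet> e t w)" "(\<integral>w. Y w \<bullet> e t w \<partial>M) = 0"
proof -
  interpret sigma_finite_subalgebra M "F t" by (rule sfs)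
  show "integrable M (\<lambda>w. Y w \<bullet> e t w)" by (rule L2_inner[OF Y eL])
  have RL: "L2 M (Rr t)" using L2_add[OF eL rL] by simp
  have Ym[measurable]: "Y \<in> borel_measurable M" using L2_meas[OF Y] .
  have [measurable]: "Rr t \<in> borel_measurable M" by (rule Rr_meas)
  have comp: "(\<integral>w. (Y w \<bullet> b) * (Rr t w \<bullet> b) \<partial>M) = (\<integral>w. (Y w \<bullet> b) * (r t w \<bullet> b) \<partial>M)"
    and intR: "integrable M (\<lambda>w. (Y w \<bullet> b) * (Rr t w \<bullet> b))"
    and intr: "integrable M (\<lambda>w. (Y w \<bullet> b) * (r t w \<bullet> b))"
    if b: "b \<in> Basis" for b
  proof -
    have Lb: "L2 M (\<lambda>w. (Y w \<bullet> b) *\<^sub>R b)"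
      by (rule L2_bound[OF Y, of _ 1]) (use b in \<open>auto simp: Basis_le_norm\<close>)
    show i1: "integrable M (\<lambda>w. (Y w \<bullet> b) * (Rr t w \<bullet> b))"
      using L2_inner[OF Lb RL] by (simp add: inner_commute)
    show "integrable M (\<lambda>w. (Y w \<bullet> b) * (r t w \<bullet> b))"
      using L2_inner[OF Lb rL] by (simp add: inner_commute)
    have Fm: "(\<lambda>w. Y w \<bullet> b) \<in> borel_measurable (F t)" using YF by measurable
    have "(\<integral>w. (Y w \<bullet> b) * real_cond_exp M (F t) (\<lambda>w. Rr t w \<bullet> b) w \<partial>M) = (\<integral>w. (Y w \<bullet> b) * (Rr t w \<bullet> b) \<partial>M)"
      by (rule real_cond_exp_intg(2)[OF i1 Fm]) measurable
    moreover have "(\<integral>w. (Y w \<bullet> b) * real_cond_exp M (F t) (\<lambda>w. Rr t w \<bullet> b) w \<partial>M) = (\<integral>w. (Y w \<bullet> b) * (r t w \<bullet> b) \<partial>M)"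
    proof (rule integral_cong_AE)
      show "AE w in M. (Y w \<bullet> b) * real_cond_exp M (F t) (\<lambda>w. Rr t w \<bullet> b) w = (Y w \<bullet> b) * (r t w \<bullet> b)"
        using unbiased[of b t, OF b] by eventually_elim simp
    qed (auto simp: borel_measurable_cond_exp2)
    ultimately show "(\<integral>w. (Y w \<bullet> b) * (Rr t w \<bullet> b) \<partial>M) = (\<integral>w. (Y w \<bullet> b) * (r t w \<bullet> b) \<partial>M)" by simp
  qed
  have "(\<lambda>w. Y w \<bullet> e t w) = (\<lambda>w. \<Sum>b\<in>Basis. (Y w \<bullet> b) * (Rr t w \<bullet> b) - (Y w \<bullet> b) * (r t w \<bullet> b))"
    by (subst euclidean_inner) (simp add: inner_diff_left algebra_simps)
  then have "(\<integral>w. Y w \<bullet> e t w \<partial>M) = (\<Sum>b\<in>Basis. \<integral>w. (Y w \<bullet> b) * (Rr t w \<bullet> b) - (Y w \<bullet> b) * (r t w \<bullet> b) \<partial>M)"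
    using intR intr by (simp add: integral_sum)
  also have "\<dots> = 0" using comp intR intr by (simp add: integral_diff)
  finally show "(\<integral>w. Y w \<bullet> e t w \<partial>M) = 0" .
qed

lemma noise1:
  assumes rL: "L2 M (r t)"
  shows "L2 M (e t)" "(\<integral>w. (norm (e t w))\<^sup>2 \<partial>M) \<le> \<omega> * (\<integral>w. (norm (r t w))\<^sup>2 \<partial>M)"
proof -
  interpret sigma_finite_subalgebra M "F t" by (rule sfs)
  have [measurable]: "Rr t \<in> borel_measurable M" by (rule Rr_meas)
  have ir: "integrable M (\<lambda>w. \<omega> * (norm (r t w))\<^sup>2)" using L2_int[OF rL] by simp
  have "(\<integral>\<^sup>+w. ennreal ((norm (e t w))\<^sup>2) \<partial>M)
      = (\<integral>\<^sup>+w. (\<lambda>_. 1) w * nn_cond_exp M (F t) (\<lambda>w. ennreal ((norm (e t w))\<^sup>2)) w \<partial>M)"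
    by (subst nn_cond_exp_intg) (auto)
  also have "\<dots> \<le> (\<integral>\<^sup>+w. ennreal (\<omega> * (norm (r t w))\<^sup>2) \<partial>M)"
    using var1[of t] by (intro nn_integral_mono_AE) auto
  also have "\<dots> = ennreal (\<integral>w. \<omega> * (norm (r t w))\<^sup>2 \<partial>M)"
    using om_nonneg by (intro nn_integral_eq_integral[OF ir]) auto
  finally have le: "(\<integral>\<^sup>+w. ennreal ((norm (e t w))\<^sup>2) \<partial>M) \<le> ennreal (\<integral>w. \<omega> * (norm (r t w))\<^sup>2 \<partial>M)" .
  have ie: "integrable M (\<lambda>w. (norm (e t w))\<^sup>2)"
    by (rule integrableI_nonneg) (use le in \<open>auto simp: top.not_eq_extremum intro: le_less_trans\<close>)
  then show "L2 M (e t)" by (simp add: L2_def)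
  have "ennreal (\<integral>w. (norm (e t w))\<^sup>2 \<partial>M) \<le> ennreal (\<integral>w. \<omega> * (norm (r t w))\<^sup>2 \<partial>M)"
    using le by (subst (asm) nn_integral_eq_integral[OF ie]) auto
  moreover have "(\<integral>w. \<omega> * (norm (r t w))\<^sup>2 \<partial>M) \<ge> 0" using om_nonneg by simp
  ultimately show "(\<integral>w. (norm (e t w))\<^sup>2 \<partial>M) \<le> \<omega> * (\<integral>w. (norm (r t w))\<^sup>2 \<partial>M)"
    by (simp add: ennreal_le_iff)
qed

lemma noise2:
  assumes rL: "L2 M (r t)" and eL: "L2 M (e t)"
  shows "(\<integral>w. (norm (adjoint K (e t w)))\<^sup>2 \<partial>M) + (\<integral>w. \<zeta> * (norm (adjoint K (r t w)))\<^sup>2 \<partial>M)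
          \<le> (\<integral>w. \<omega>ran * (norm (r t w))\<^sup>2 \<partial>M)"
proof -
  interpret sigma_finite_subalgebra M "F t" by (rule sfs)
  have [measurable]: "Rr t \<in> borel_measurable M" by (rule Rr_meas)
  have i1: "integrable M (\<lambda>w. (norm (adjoint K (e t w)))\<^sup>2)" using L2_int[OF L2_lin[OF eL KTlin]] .
  have i2: "integrable M (\<lambda>w. \<zeta> * (norm (adjoint K (r t w)))\<^sup>2)" using L2_int[OF L2_lin[OF rL KTlin]] by simp
  have i3: "integrable M (\<lambda>w. \<omega>ran * (norm (r t w))\<^sup>2)" using L2_int[OF rL] by simp
  have "ennreal (\<integral>w. (norm (adjoint K (e t w)))\<^sup>2 \<partial>M) + ennreal (\<integral>w. \<zeta> * (norm (adjoint K (r t w)))\<^sup>2 \<partial>M)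
      = (\<integral>\<^sup>+w. ennreal ((norm (adjoint K (e t w)))\<^sup>2) \<partial>M) + (\<integral>\<^sup>+w. ennreal (\<zeta> * (norm (adjoint K (r t w)))\<^sup>2) \<partial>M)"
    using zeta by (simp add: nn_integral_eq_integral[OF i1] nn_integral_eq_integral[OF i2])
  also have "(\<integral>\<^sup>+w. ennreal ((norm (adjoint K (e t w)))\<^sup>2) \<partial>M)
      = (\<integral>\<^sup>+w. (\<lambda>_. 1) w * nn_cond_exp M (F t) (\<lambda>w. ennreal ((norm (adjoint K (e t w)))\<^sup>2)) w \<partial>M)"
    by (subst nn_cond_exp_intg) auto
  also have "\<dots> + (\<integral>\<^sup>+w. ennreal (\<zeta> * (norm (adjoint K (r t w)))\<^sup>2) \<partial>M)
      = (\<integral>\<^sup>+w. nn_cond_exp M (F t) (\<lambda>w. ennreal ((norm (adjoint K (e t w)))\<^sup>2)) w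
             + ennreal (\<zeta> * (norm (adjoint K (r t w)))\<^sup>2) \<partial>M)"
    by (subst nn_integral_add) auto
  also have "\<dots> \<le> (\<integral>\<^sup>+w. ennreal (\<omega>ran * (norm (r t w))\<^sup>2) \<partial>M)"
    using var2[of t] by (intro nn_integral_mono_AE) auto
  also have "\<dots> = ennreal (\<integral>w. \<omega>ran * (norm (r t w))\<^sup>2 \<partial>M)"
    using omran_nonneg by (intro nn_integral_eq_integral[OF i3]) auto
  finally have le: "ennreal (\<integral>w. (norm (adjoint K (e t w)))\<^sup>2 \<partial>M) + ennreal (\<integral>w. \<zeta> * (norm (adjoint K (r t w)))\<^sup>2 \<partial>M)
      \<le> ennreal (\<integral>w. \<omega>ran * (norm (r t w))\<^sup>2 \<partial>M)" .
  have p1: "(\<integral>w. (norm (adjoint K (e t w)))\<^sup>2 \<partial>M) \<ge> 0" by simp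
  have p2: "(\<integral>w. \<zeta> * (norm (adjoint K (r t w)))\<^sup>2 \<partial>M) \<ge> 0" using zeta by simp
  have p3: "(\<integral>w. \<omega>ran * (norm (r t w))\<^sup>2 \<partial>M) \<ge> 0" using omran_nonneg by simp
  show ?thesis using le p1 p2 p3 by (simp add: ennreal_plus[symmetric] ennreal_le_iff del: ennreal_plus)
qed

lemma P_fix: "P (us + \<tau> *\<^sub>R K xs) = us"
proof -
  have "((1 / \<tau>) *\<^sub>R (us - P (us + \<tau> *\<^sub>R K xs)) + K xs - K xs) \<bullet> (P (us + \<tau> *\<^sub>R K xs) - us)
      \<ge> \<mu> / 2 * (norm (P (us + \<tau> *\<^sub>R K xs) - us))\<^sup>2"
    by (rule mono_step) simp
  then have m: "((1 / \<tau>) *\<^sub>R (us - P (us + \<tau> *\<^sub>R K xs))) \<bullet> (P (us + \<tau> *\<^sub>R K xs) - us)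
      \<ge> \<mu> / 2 * (norm (P (us + \<tau> *\<^sub>R K xs) - us))\<^sup>2" by simp
  have "\<mu> / 2 * (norm (P (us + \<tau> *\<^sub>R K xs) - us))\<^sup>2 \<ge> 0" using mu_nonneg by simp
  with m have "((1 / \<tau>) *\<^sub>R (us - P (us + \<tau> *\<^sub>R K xs))) \<bullet> (P (us + \<tau> *\<^sub>R K xs) - us) \<ge> 0" by linarith
  then have "- ((1 / \<tau>) * (norm (P (us + \<tau> *\<^sub>R K xs) - us))\<^sup>2) \<ge> 0"
    by (simp add: power2_norm_eq_inner inner_diff_left inner_diff_right inner_commute algebra_simps)
  then have "(norm (P (us + \<tau> *\<^sub>R K xs) - us))\<^sup>2 / \<tau> \<le> 0" by simp
  then have "(norm (P (us + \<tau> *\<^sub>R K xs) - us))\<^sup>2 \<le> 0" using tau by (simp add: divide_le_0_iff)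
  then show ?thesis by simp
qed

end



lemma aux_id2:
  fixes c t n b e :: real
  assumes "c > 0" "t > 0"
  shows "c / t * (n + 2 / c * b + e / c\<^sup>2) = c / t * n + 2 / t * b + e / (t * c)"
  using assms by (simp add: field_simps power2_eq_square)

context det begin

lemma id1: "(norm (A - \<gamma> *\<^sub>R adjoint K e))\<^sup>2 / \<gamma> = (norm A)\<^sup>2 / \<gamma> - 2 * (K A \<bullet> e) + \<gamma> * (norm (adjoint K e))\<^sup>2"
proof -
  have "(norm (A - \<gamma> *\<^sub>R adjoint K e))\<^sup>2 = (norm A)\<^sup>2 - 2 * \<gamma> * (K A \<bullet> e) + \<gamma> * \<gamma> * (norm (adjoint K e))\<^sup>2"
    unfolding power2_norm_eq_inner
    by (simp add: inner_diff_left inner_diff_right inner_commute adj algebra_simps)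
  then show ?thesis using gamma by (simp add: field_simps)
qed

lemma id3: fixes B e :: 'u shows "(norm (B + (1 / (1 + \<omega>)) *\<^sub>R e))\<^sup>2 = (norm B)\<^sup>2 + 2 / (1 + \<omega>) * (B \<bullet> e) + (norm e)\<^sup>2 / (1 + \<omega>)\<^sup>2"
  unfolding power2_norm_eq_inner
  by (simp add: inner_add_left inner_add_right inner_commute power2_eq_square algebra_simps)

lemma id2: fixes B e :: 'u shows "(1 + \<omega>) / \<tau> * (norm (B + (1 / (1 + \<omega>)) *\<^sub>R e))\<^sup>2
    = (1 + \<omega>) / \<tau> * (norm B)\<^sup>2 + 2 / \<tau> * (B \<bullet> e) + (norm e)\<^sup>2 / (\<tau> * (1 + \<omega>))"
  unfolding id3 by (rule aux_id2) (use om_nonneg tau in auto)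

lemma id4: fixes W \<rho> :: 'u shows "(1 + \<omega>) * (norm (W + (1 / (1 + \<omega>)) *\<^sub>R \<rho>))\<^sup>2 + \<omega> * (norm \<rho>)\<^sup>2 / (1 + \<omega>)
    = \<omega> * (norm W)\<^sup>2 + (norm (W + \<rho>))\<^sup>2"
proof -
  have o: "1 + \<omega> > 0" using om_nonneg by simp
  have "(1 + \<omega>) / 1 * ((norm W)\<^sup>2 + 2 / (1 + \<omega>) * (W \<bullet> \<rho>) + (norm \<rho>)\<^sup>2 / (1 + \<omega>)\<^sup>2) + (1 + \<omega> - 1) * (norm \<rho>)\<^sup>2 / (1 * (1 + \<omega>))
      = (1 + \<omega>) * (norm W)\<^sup>2 / 1 + (2 * (W \<bullet> \<rho>) + (norm \<rho>)\<^sup>2) / 1"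
    by (rule aux_F2) (use o in auto)
  moreover have "(norm (W + \<rho>))\<^sup>2 = (norm W)\<^sup>2 + 2 * (W \<bullet> \<rho>) + (norm \<rho>)\<^sup>2"
    unfolding power2_norm_eq_inner by (simp add: inner_add_left inner_add_right inner_commute)
  ultimately show ?thesis unfolding id3 by (simp add: algebra_simps)
qed

end

context stoch begin

lemma x_next: "x (Suc t) w - xs = (xh (x t w) (u t w) - \<gamma> *\<^sub>R adjoint K (r t w) - xs) - \<gamma> *\<^sub>R adjoint K (e t w)"
proof -
  have o: "1 + \<omega> \<noteq> 0" using om_nonneg by simp
  have "adjoint K (u (Suc t) w) - adjoint K (u t w) = adjoint K (u (Suc t) w - u t w)"
    by (simp add: linear_diff[OF KTlin])
  also have "\<dots> = (1 / (1 + \<omega>)) *\<^sub>R adjoint K (Rr t w)" by (simp add: u_step linear_scale[OF KTlin])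
  finally have "(\<gamma> * (1 + \<omega>)) *\<^sub>R (adjoint K (u (Suc t) w) - adjoint K (u t w)) = \<gamma> *\<^sub>R adjoint K (Rr t w)"
    using o by simp
  moreover have "adjoint K (Rr t w) = adjoint K (r t w) + adjoint K (e t w)"
    by (simp add: linear_diff[OF KTlin])
  ultimately show ?thesis unfolding x_step xhat_xh by (simp add: algebra_simps)
qed

lemma u_next: "u (Suc t) w - us = (u t w - us + (1 / (1 + \<omega>)) *\<^sub>R r t w) + (1 / (1 + \<omega>)) *\<^sub>R e t w"
  unfolding u_step by (simp add: algebra_simps)

lemma xh_xs: "xh X U - xs = (X - xs) - \<gamma> *\<^sub>R (gradf X - gradf xs) - \<gamma> *\<^sub>R adjoint K (U - us)"
  unfolding xh_def gradf_xs by (simp add: linear_diff[OF KTlin] algebra_simps)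

lemma step_L2:
  assumes Lx: "L2 M (\<lambda>w. x t w - xs)" and Lu: "L2 M (\<lambda>w. u t w - us)"
  shows "L2 M (r t)" "L2 M (\<lambda>w. xh (x t w) (u t w) - \<gamma> *\<^sub>R adjoint K (r t w) - xs)"
    "L2 M (\<lambda>w. u t w - us + (1 / (1 + \<omega>)) *\<^sub>R r t w)"
proof -
  have Lg: "L2 M (\<lambda>w. gradf (x t w) - gradf xs)"
    by (rule L2_bound[OF Lx, of _ Lf]) (auto intro: lip_grad_bound[OF f_smooth])
  have Lxh0: "L2 M (\<lambda>w. (x t w - xs) - \<gamma> *\<^sub>R (gradf (x t w) - gradf xs) - \<gamma> *\<^sub>R adjoint K (u t w - us))"
    by (intro L2_diff L2_scale L2_lin[OF _ KTlin] Lx Lg Lu)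
  have Lxh: "L2 M (\<lambda>w. xh (x t w) (u t w) - xs)" using Lxh0 unfolding xh_xs .
  have Lz: "L2 M (\<lambda>w. (u t w - us) + \<tau> *\<^sub>R K (xh (x t w) (u t w) - xs))"
    by (intro L2_add L2_scale L2_lin[OF _ K_lin] Lu Lxh)
  have LP: "L2 M (\<lambda>w. P (u t w + \<tau> *\<^sub>R K (xh (x t w) (u t w))) - us)"
  proof (rule L2_bound[OF Lz, of _ 1])
    show "(\<lambda>w. P (u t w + \<tau> *\<^sub>R K (xh (x t w) (u t w))) - us) \<in> borel_measurable M" by measurable
    fix w
    have "norm (P (u t w + \<tau> *\<^sub>R K (xh (x t w) (u t w))) - us)
        = norm (P (u t w + \<tau> *\<^sub>R K (xh (x t w) (u t w))) - P (us + \<tau> *\<^sub>R K xs))" by (simp add: P_fix)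
    also have "\<dots> \<le> norm ((u t w + \<tau> *\<^sub>R K (xh (x t w) (u t w))) - (us + \<tau> *\<^sub>R K xs))" by (rule P_nonexp)
    also have "(u t w + \<tau> *\<^sub>R K (xh (x t w) (u t w))) - (us + \<tau> *\<^sub>R K xs) = (u t w - us) + \<tau> *\<^sub>R K (xh (x t w) (u t w) - xs)"
      by (simp add: linear_diff[OF K_lin] algebra_simps)
    finally show "norm (P (u t w + \<tau> *\<^sub>R K (xh (x t w) (u t w))) - us) \<le> 1 * norm ((u t w - us) + \<tau> *\<^sub>R K (xh (x t w) (u t w) - xs))"
      by simp
  qed
  have "L2 M (\<lambda>w. (P (u t w + \<tau> *\<^sub>R K (xh (x t w) (u t w))) - us) - (u t w - us))"
    by (rule L2_diff[OF LP Lu])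
  then show Lr: "L2 M (r t)" unfolding r_rho rho_def by simp
  have "L2 M (\<lambda>w. (xh (x t w) (u t w) - xs) - \<gamma> *\<^sub>R adjoint K (r t w))"
    by (intro L2_diff L2_scale L2_lin[OF _ KTlin] Lxh Lr)
  then show "L2 M (\<lambda>w. xh (x t w) (u t w) - \<gamma> *\<^sub>R adjoint K (r t w) - xs)" by (simp add: algebra_simps)
  show "L2 M (\<lambda>w. u t w - us + (1 / (1 + \<omega>)) *\<^sub>R r t w)"
    by (intro L2_add L2_scale Lu Lr)
qed

end


context stoch begin

lemma step_main:
  assumes Lx: "L2 M (\<lambda>w. x t w - xs)" and Lu: "L2 M (\<lambda>w. u t w - us)"
  shows "L2 M (\<lambda>w. x (Suc t) w - xs)" "L2 M (\<lambda>w. u (Suc t) w - us)"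
    "(\<integral>w. Psi (x (Suc t) w) (u (Suc t) w) \<partial>M)
       + (\<integral>w. \<gamma> * (norm (adjoint K (u t w - us)))\<^sup>2 + \<mu> * (norm (u t w + r t w - us))\<^sup>2 \<partial>M)
     \<le> (\<integral>w. Psi (x t w) (u t w) \<partial>M)"
    "(1 + \<omega>) * (\<integral>w. (norm (u (Suc t) w - us))\<^sup>2 \<partial>M)
     \<le> (\<integral>w. \<omega> * (norm (u t w - us))\<^sup>2 + (norm (u t w + r t w - us))\<^sup>2 \<partial>M)"
proof -
  define A where "A w = xh (x t w) (u t w) - \<gamma> *\<^sub>R adjoint K (r t w) - xs" for w
  define B where "B w = u t w - us + (1 / (1 + \<omega>)) *\<^sub>R r t w" for w
  define Y where "Y w = (2 / \<tau>) *\<^sub>R B w - 2 *\<^sub>R K (A w)" for w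
  have Lr: "L2 M (r t)" and LA: "L2 M A" and LB: "L2 M B"
    using step_L2[OF Lx Lu] unfolding A_def[abs_def] B_def[abs_def] by auto
  have Le: "L2 M (e t)" and E2: "(\<integral>w. (norm (e t w))\<^sup>2 \<partial>M) \<le> \<omega> * (\<integral>w. (norm (r t w))\<^sup>2 \<partial>M)"
    using noise1[OF Lr] by auto
  have KE2: "(\<integral>w. (norm (adjoint K (e t w)))\<^sup>2 \<partial>M) + (\<integral>w. \<zeta> * (norm (adjoint K (r t w)))\<^sup>2 \<partial>M)
          \<le> (\<integral>w. \<omega>ran * (norm (r t w))\<^sup>2 \<partial>M)" by (rule noise2[OF Lr Le])
  have xn: "x (Suc t) w - xs = A w - \<gamma> *\<^sub>R adjoint K (e t w)" for w unfolding A_def by (rule x_next)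
  have un: "u (Suc t) w - us = B w + (1 / (1 + \<omega>)) *\<^sub>R e t w" for w unfolding B_def by (rule u_next)
  have LKe: "L2 M (\<lambda>w. adjoint K (e t w))" by (rule L2_lin[OF Le KTlin])
  have LKr: "L2 M (\<lambda>w. adjoint K (r t w))" by (rule L2_lin[OF Lr KTlin])
  show Lx1: "L2 M (\<lambda>w. x (Suc t) w - xs)" unfolding xn by (intro L2_diff L2_scale LA LKe)
  show Lu1: "L2 M (\<lambda>w. u (Suc t) w - us)" unfolding un by (intro L2_add L2_scale LB Le)
  note [measurable] = x_Fmeas u_Fmeas
  have YF: "Y \<in> borel_measurable (F t)"
    unfolding Y_def[abs_def] A_def[abs_def] B_def[abs_def] r_rho by measurable
  have LY: "L2 M Y" unfolding Y_def[abs_def] by (intro L2_diff L2_scale L2_lin[OF _ K_lin] LA LB)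
  have BF: "B \<in> borel_measurable (F t)"
    unfolding B_def[abs_def] r_rho by measurable
  have intY: "integrable M (\<lambda>w. Y w \<bullet> e t w)" and zY: "(\<integral>w. Y w \<bullet> e t w \<partial>M) = 0"
    using cross_zero[OF YF LY Lr Le] by auto
  have intB: "integrable M (\<lambda>w. B w \<bullet> e t w)" and zB: "(\<integral>w. B w \<bullet> e t w \<partial>M) = 0"
    using cross_zero[OF BF LB Lr Le] by auto
  have iA: "integrable M (\<lambda>w. (norm (A w))\<^sup>2)" using L2_int[OF LA] .
  have iB: "integrable M (\<lambda>w. (norm (B w))\<^sup>2)" using L2_int[OF LB] .
  have ie: "integrable M (\<lambda>w. (norm (e t w))\<^sup>2)" using L2_int[OF Le] .
  have iKe: "integrable M (\<lambda>w. (norm (adjoint K (e t w)))\<^sup>2)" using L2_int[OF LKe] .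
  have ir: "integrable M (\<lambda>w. (norm (r t w))\<^sup>2)" using L2_int[OF Lr] .
  have iKr: "integrable M (\<lambda>w. (norm (adjoint K (r t w)))\<^sup>2)" using L2_int[OF LKr] .
  have iW: "integrable M (\<lambda>w. (norm (u t w - us))\<^sup>2)" using L2_int[OF Lu] .
  have iX: "integrable M (\<lambda>w. (norm (x t w - xs))\<^sup>2)" using L2_int[OF Lx] .
  have LD: "L2 M (\<lambda>w. u t w + r t w - us)" using L2_add[OF Lu Lr] by (simp add: algebra_simps)
  have iD: "integrable M (\<lambda>w. (norm (u t w + r t w - us))\<^sup>2)" using L2_int[OF LD] .
  have iKW: "integrable M (\<lambda>w. (norm (adjoint K (u t w - us)))\<^sup>2)" using L2_int[OF L2_lin[OF Lu KTlin]] .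
  define Q where "Q w = (norm (A w))\<^sup>2 / \<gamma> + (1 + \<omega>) / \<tau> * (norm (B w))\<^sup>2" for w
  have iQ: "integrable M Q" unfolding Q_def[abs_def] using iA iB by simp
  have YE: "Y w \<bullet> e t w = 2 / \<tau> * (B w \<bullet> e t w) - 2 * (K (A w) \<bullet> e t w)" for w
    unfolding Y_def by (simp add: inner_diff_left)
  have eqP: "Psi (x (Suc t) w) (u (Suc t) w)
      = Q w + Y w \<bullet> e t w + \<gamma> * (norm (adjoint K (e t w)))\<^sup>2 + (1 / (\<tau> * (1 + \<omega>))) * (norm (e t w))\<^sup>2" for w
    unfolding Psi_def xn un id1 id2 Q_def YE by (simp add: algebra_simps)
  have IP1: "(\<integral>w. Psi (x (Suc t) w) (u (Suc t) w) \<partial>M)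
      = integral\<^sup>L M Q + \<gamma> * (\<integral>w. (norm (adjoint K (e t w)))\<^sup>2 \<partial>M) + (1 / (\<tau> * (1 + \<omega>))) * (\<integral>w. (norm (e t w))\<^sup>2 \<partial>M)"
    unfolding eqP using iQ intY iKe ie zY by simp
  define G where "G w = \<gamma> * (norm (adjoint K (u t w - us)))\<^sup>2 + \<mu> * (norm (u t w + r t w - us))\<^sup>2" for w
  have iG: "integrable M G" unfolding G_def[abs_def] using iKW iD by simp
  define S where "S w = (\<gamma> * \<omega>ran * (norm (r t w))\<^sup>2 - \<gamma> * \<zeta> * (norm (adjoint K (r t w)))\<^sup>2)
       + \<omega> * (norm (r t w))\<^sup>2 / (\<tau> * (1 + \<omega>))" for w
  have iS: "integrable M S" unfolding S_def[abs_def] using ir iKr by simp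
  have lyap: "Q w + S w + G w \<le> Psi (x t w) (u t w)" for w
    using det_lyap[of "x t w" "u t w"] unfolding Q_def S_def G_def A_def B_def r_rho
    by (simp add: algebra_simps)
  have iPsi: "integrable M (\<lambda>w. Psi (x t w) (u t w))" unfolding Psi_def using iX iW by simp
  have "(\<integral>w. Q w + S w + G w \<partial>M) \<le> (\<integral>w. Psi (x t w) (u t w) \<partial>M)"
    using iQ iS iG iPsi lyap by (intro integral_mono) auto
  moreover have "(\<integral>w. Q w + S w + G w \<partial>M) = integral\<^sup>L M Q + integral\<^sup>L M S + integral\<^sup>L M G"
    using iQ iS iG by simp
  moreover have IS: "integral\<^sup>L M S = \<gamma> * ((\<integral>w. \<omega>ran * (norm (r t w))\<^sup>2 \<partial>M) - (\<integral>w. \<zeta> * (norm (adjoint K (r t w)))\<^sup>2 \<partial>M))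
      + (1 / (\<tau> * (1 + \<omega>))) * (\<omega> * (\<integral>w. (norm (r t w))\<^sup>2 \<partial>M))"
    unfolding S_def using ir iKr by (simp add: algebra_simps)
  moreover have "\<gamma> * (\<integral>w. (norm (adjoint K (e t w)))\<^sup>2 \<partial>M)
      \<le> \<gamma> * ((\<integral>w. \<omega>ran * (norm (r t w))\<^sup>2 \<partial>M) - (\<integral>w. \<zeta> * (norm (adjoint K (r t w)))\<^sup>2 \<partial>M))"
    using KE2 gamma by (intro mult_left_mono) auto
  moreover have "(1 / (\<tau> * (1 + \<omega>))) * (\<integral>w. (norm (e t w))\<^sup>2 \<partial>M) \<le> (1 / (\<tau> * (1 + \<omega>))) * (\<omega> * (\<integral>w. (norm (r t w))\<^sup>2 \<partial>M))"
    using E2 tau om_nonneg by (intro mult_left_mono) auto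
  ultimately show "(\<integral>w. Psi (x (Suc t) w) (u (Suc t) w) \<partial>M)
       + (\<integral>w. \<gamma> * (norm (adjoint K (u t w - us)))\<^sup>2 + \<mu> * (norm (u t w + r t w - us))\<^sup>2 \<partial>M)
     \<le> (\<integral>w. Psi (x t w) (u t w) \<partial>M)"
    unfolding IP1 G_def[symmetric] by linarith
  have equ: "(norm (u (Suc t) w - us))\<^sup>2 = (norm (B w))\<^sup>2 + 2 / (1 + \<omega>) * (B w \<bullet> e t w) + (norm (e t w))\<^sup>2 / (1 + \<omega>)\<^sup>2" for w
    unfolding un id3 ..
  have IU: "(\<integral>w. (norm (u (Suc t) w - us))\<^sup>2 \<partial>M) = (\<integral>w. (norm (B w))\<^sup>2 \<partial>M) + (\<integral>w. (norm (e t w))\<^sup>2 \<partial>M) / (1 + \<omega>)\<^sup>2"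
    unfolding equ using iB intB ie zB by simp
  have o: "1 + \<omega> > 0" using om_nonneg by simp
  have "(1 + \<omega>) * ((\<integral>w. (norm (e t w))\<^sup>2 \<partial>M) / (1 + \<omega>)\<^sup>2) \<le> (1 + \<omega>) * ((\<omega> * (\<integral>w. (norm (r t w))\<^sup>2 \<partial>M)) / (1 + \<omega>)\<^sup>2)"
    using E2 o by (intro mult_left_mono divide_right_mono) auto
  also have "\<dots> = \<omega> * (\<integral>w. (norm (r t w))\<^sup>2 \<partial>M) / (1 + \<omega>)" using o by (simp add: power2_eq_square)
  finally have c1: "(1 + \<omega>) * (\<integral>w. (norm (u (Suc t) w - us))\<^sup>2 \<partial>M)
      \<le> (1 + \<omega>) * (\<integral>w. (norm (B w))\<^sup>2 \<partial>M) + \<omega> * (\<integral>w. (norm (r t w))\<^sup>2 \<partial>M) / (1 + \<omega>)"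
    unfolding IU by (simp add: distrib_left)
  have "(\<integral>w. \<omega> * (norm (u t w - us))\<^sup>2 + (norm (u t w + r t w - us))\<^sup>2 \<partial>M)
      = (\<integral>w. (1 + \<omega>) * (norm (B w))\<^sup>2 + \<omega> * (norm (r t w))\<^sup>2 / (1 + \<omega>) \<partial>M)"
  proof (rule Bochner_Integration.integral_cong[OF refl])
    fix w
    have ee: "u t w + r t w - us = (u t w - us) + r t w" by (simp add: algebra_simps)
    show "\<omega> * (norm (u t w - us))\<^sup>2 + (norm (u t w + r t w - us))\<^sup>2
        = (1 + \<omega>) * (norm (B w))\<^sup>2 + \<omega> * (norm (r t w))\<^sup>2 / (1 + \<omega>)"
      unfolding B_def ee using id4[of "u t w - us" "r t w"] by simp
  qed
  also have "\<dots> = (1 + \<omega>) * (\<integral>w. (norm (B w))\<^sup>2 \<partial>M) + \<omega> * (\<integral>w. (norm (r t w))\<^sup>2 \<partial>M) / (1 + \<omega>)"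
    using iB ir by simp
  finally show "(1 + \<omega>) * (\<integral>w. (norm (u (Suc t) w - us))\<^sup>2 \<partial>M)
     \<le> (\<integral>w. \<omega> * (norm (u t w - us))\<^sup>2 + (norm (u t w + r t w - us))\<^sup>2 \<partial>M)"
    using c1 by linarith
qed

end




lemma seq_bound_sum:
  fixes a g :: "nat \<Rightarrow> real"
  assumes a0: "\<And>n. a n \<ge> 0" and st: "\<And>n. a (Suc n) + g n \<le> a n"
  shows "(\<Sum>i<n. g i) \<le> a 0"
proof -
  have "(\<Sum>i<n. g i) + a n \<le> a 0" for n
  proof (induction n)
    case 0 then show ?case by simp
  next
    case (Suc n) then show ?case using st[of n] by simp
  qed
  then show ?thesis using a0[of n] by (smt (verit))
qed

lemma recur_summable:
  fixes e d :: "nat \<Rightarrow> real"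
  assumes e0: "\<And>n. e n \<ge> 0" and om: "\<omega> \<ge> 0"
    and rec: "\<And>n. (1 + \<omega>) * e (Suc n) \<le> \<omega> * e n + d n"
    and db: "\<And>n. (\<Sum>i<n. d i) \<le> D"
  shows "summable e"
proof (rule summableI_nonneg_bounded[OF e0])
  fix n
  have key: "(\<Sum>i<Suc N. e i) \<le> (1 + \<omega>) * e 0 + D" for N
  proof -
    have s1: "(\<Sum>i<Suc N. e i) = e 0 + (\<Sum>i<N. e (Suc i))" by (rule sum.lessThan_Suc_shift)
    have s2: "(\<Sum>i<N. e i) \<le> (\<Sum>i<Suc N. e i)" using e0 by simp
    have "(1 + \<omega>) * (\<Sum>i<N. e (Suc i)) \<le> \<omega> * (\<Sum>i<N. e i) + (\<Sum>i<N. d i)"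
      using rec by (simp add: sum_distrib_left sum.distrib[symmetric] sum_mono)
    also have "\<dots> \<le> \<omega> * (\<Sum>i<Suc N. e i) + D" using s2 db[of N] om by (intro add_mono mult_left_mono) auto
    finally have "(1 + \<omega>) * ((\<Sum>i<Suc N. e i) - e 0) \<le> \<omega> * (\<Sum>i<Suc N. e i) + D" using s1 by simp
    then show ?thesis by (simp add: algebra_simps)
  qed
  show "(\<Sum>i<n. e i) \<le> (1 + \<omega>) * e 0 + D"
  proof (cases n)
    case 0 then show ?thesis using e0[of 0] om db[of 0] by simp
  next
    case (Suc N) then show ?thesis using key by simp
  qed
qed

context stoch begin

lemma L2_all: "L2 M (\<lambda>w. x t w - xs) \<and> L2 M (\<lambda>w. u t w - us)"
proof (induction t)
  case 0
  have fm: "finite_measure M" using prob by (simp add: prob_space_def)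
  show ?case using L2_const[OF fm, of "x0 - xs"] L2_const[OF fm, of "u0 - us"] by (simp add: x_0 u_0)
next
  case (Suc t) then show ?case using step_main(1,2) by blast
qed

lemma convergence:
  assumes nondeg: "lambda_min (K \<circ> adjoint K) > 0 \<or> \<mu> > 0"
  shows "(\<lambda>t. \<integral>\<^sup>+ w. ennreal ((norm (u t w - us))\<^sup>2) \<partial>M) \<longlonglongrightarrow> 0"
proof -
  define a where "a t = (\<integral>w. Psi (x t w) (u t w) \<partial>M)" for t
  define g where "g t = (\<integral>w. \<gamma> * (norm (adjoint K (u t w - us)))\<^sup>2 + \<mu> * (norm (u t w + r t w - us))\<^sup>2 \<partial>M)" for t
  define e where "e t = (\<integral>w. (norm (u t w - us))\<^sup>2 \<partial>M)" for t
  define d where "d t = (\<integral>w. (norm (u t w + r t w - us))\<^sup>2 \<partial>M)" for t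
  have Lx: "L2 M (\<lambda>w. x t w - xs)" and Lu: "L2 M (\<lambda>w. u t w - us)" for t using L2_all by auto
  have a0: "a t \<ge> 0" for t unfolding a_def Psi_def using gamma tau om_nonneg by (intro integral_nonneg_AE) auto
  have st: "a (Suc t) + g t \<le> a t" for t unfolding a_def g_def by (rule step_main(3)[OF Lx Lu])
  have gsum: "(\<Sum>i<n. g i) \<le> a 0" for n by (rule seq_bound_sum[of a g, OF a0 st])
  have e0: "e t \<ge> 0" for t unfolding e_def by simp
  have Lr: "L2 M (r t)" for t using step_L2[OF Lx Lu] by blast
  have LD: "L2 M (\<lambda>w. u t w + r t w - us)" for t using L2_add[OF Lu Lr, of t t] by (simp add: algebra_simps)
  have LKW: "L2 M (\<lambda>w. adjoint K (u t w - us))" for t by (rule L2_lin[OF Lu KTlin])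
  have "summable e"
  proof (cases "lambda_min (K \<circ> adjoint K) > 0")
    case True
    obtain c where c: "c > 0" "\<And>w. c * norm w \<le> norm (adjoint K w)"
      using lambda_min_pos_bound[OF K_lin True] by blast
    have ge: "\<gamma> * c\<^sup>2 * e t \<le> g t" for t
    proof -
      have "\<gamma> * c\<^sup>2 * e t = (\<integral>w. \<gamma> * c\<^sup>2 * (norm (u t w - us))\<^sup>2 \<partial>M)" unfolding e_def by simp
      also have "\<dots> \<le> g t" unfolding g_def
      proof (rule integral_mono)
        show "integrable M (\<lambda>w. \<gamma> * c\<^sup>2 * (norm (u t w - us))\<^sup>2)" using L2_int[OF Lu] by simp
        show "integrable M (\<lambda>w. \<gamma> * (norm (adjoint K (u t w - us)))\<^sup>2 + \<mu> * (norm (u t w + r t w - us))\<^sup>2)"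
          using L2_int[OF LKW] L2_int[OF LD] by simp
        fix w
        have "(c * norm (u t w - us))\<^sup>2 \<le> (norm (adjoint K (u t w - us)))\<^sup>2"
          using c by (intro power_mono) auto
        then have "\<gamma> * c\<^sup>2 * (norm (u t w - us))\<^sup>2 \<le> \<gamma> * (norm (adjoint K (u t w - us)))\<^sup>2"
          using gamma by (simp add: power_mult_distrib mult.assoc)
        moreover have "\<mu> * (norm (u t w + r t w - us))\<^sup>2 \<ge> 0" using mu_nonneg by simp
        ultimately show "\<gamma> * c\<^sup>2 * (norm (u t w - us))\<^sup>2 \<le> \<gamma> * (norm (adjoint K (u t w - us)))\<^sup>2 + \<mu> * (norm (u t w + r t w - us))\<^sup>2"
          by linarith
      qed
      finally show ?thesis .
    qed
    have gc: "\<gamma> * c\<^sup>2 > 0" using gamma c by simp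
    show ?thesis
    proof (rule summableI_nonneg_bounded[OF e0])
      fix n
      have "(\<gamma> * c\<^sup>2) * (\<Sum>i<n. e i) \<le> (\<Sum>i<n. g i)" using ge by (simp add: sum_distrib_left sum_mono)
      also have "\<dots> \<le> a 0" by (rule gsum)
      finally show "(\<Sum>i<n. e i) \<le> a 0 / (\<gamma> * c\<^sup>2)" using gc by (simp add: field_simps)
    qed
  next
    case False
    then have mu: "\<mu> > 0" using nondeg by blast
    have gd: "\<mu> * d t \<le> g t" for t
    proof -
      have "\<mu> * d t = (\<integral>w. \<mu> * (norm (u t w + r t w - us))\<^sup>2 \<partial>M)" unfolding d_def by simp
      also have "\<dots> \<le> g t" unfolding g_def
      proof (rule integral_mono)
        show "integrable M (\<lambda>w. \<mu> * (norm (u t w + r t w - us))\<^sup>2)" using L2_int[OF LD] by simp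
        show "integrable M (\<lambda>w. \<gamma> * (norm (adjoint K (u t w - us)))\<^sup>2 + \<mu> * (norm (u t w + r t w - us))\<^sup>2)"
          using L2_int[OF LKW] L2_int[OF LD] by simp
        fix w
        have "\<gamma> * (norm (adjoint K (u t w - us)))\<^sup>2 \<ge> 0" using gamma by simp
        then show "\<mu> * (norm (u t w + r t w - us))\<^sup>2 \<le> \<gamma> * (norm (adjoint K (u t w - us)))\<^sup>2 + \<mu> * (norm (u t w + r t w - us))\<^sup>2"
          by linarith
      qed
      finally show ?thesis .
    qed
    have db: "(\<Sum>i<n. d i) \<le> a 0 / \<mu>" for n
    proof -
      have "\<mu> * (\<Sum>i<n. d i) \<le> (\<Sum>i<n. g i)" using gd by (simp add: sum_distrib_left sum_mono)
      also have "\<dots> \<le> a 0" by (rule gsum)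
      finally show ?thesis using mu by (simp add: field_simps)
    qed
    have rec: "(1 + \<omega>) * e (Suc n) \<le> \<omega> * e n + d n" for n
    proof -
      have "(1 + \<omega>) * e (Suc n) \<le> (\<integral>w. \<omega> * (norm (u n w - us))\<^sup>2 + (norm (u n w + r n w - us))\<^sup>2 \<partial>M)"
        unfolding e_def by (rule step_main(4)[OF Lx Lu])
      also have "\<dots> = \<omega> * e n + d n" unfolding e_def d_def using L2_int[OF Lu] L2_int[OF LD] by simp
      finally show ?thesis .
    qed
    show ?thesis by (rule recur_summable[OF e0 om_nonneg rec db])
  qed
  then have "e \<longlonglongrightarrow> 0" by (rule summable_LIMSEQ_zero)
  then have "(\<lambda>t. ennreal (e t)) \<longlonglongrightarrow> ennreal 0" by (rule tendsto_ennrealI)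
  moreover have "(\<integral>\<^sup>+ w. ennreal ((norm (u t w - us))\<^sup>2) \<partial>M) = ennreal (e t)" for t
    unfolding e_def using L2_int[OF Lu] by (intro nn_integral_eq_integral) auto
  ultimately show ?thesis by simp
qed

end



theorem theorem12:
  fixes M :: "'w measure"
    and f :: "'x::euclidean_space \<Rightarrow> real" and gradf :: "'x \<Rightarrow> 'x" and Lf :: real
    and h :: "'u::euclidean_space \<Rightarrow> ereal" and K :: "'x \<Rightarrow> 'u" and \<mu> :: real
    and \<gamma> \<tau> \<omega> \<omega>ran \<zeta> :: real
    and x0 :: 'x and u0 :: 'u
    and x xhat :: "nat \<Rightarrow> 'w \<Rightarrow> 'x" and u r Rr :: "nat \<Rightarrow> 'w \<Rightarrow> 'u"
    and F :: "nat \<Rightarrow> 'w measure"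
  assumes prob: "prob_space M"
    and K_lin: "linear K" and K_nz: "K \<noteq> (\<lambda>_. 0)"
    and f_conv: "convex_on UNIV f"
    and f_grad: "\<And>z. (f has_derivative (\<lambda>d. gradf z \<bullet> d)) (at z)"
    and f_smooth: "Lf-lipschitz_on UNIV gradf"
    and h_proper: "proper_fun h" and h_closed: "closed_fun h" and h_conv: "convex_fun h"
    and mu_nonneg: "\<mu> \<ge> 0" and h_strong: "strongly_convex_fun \<mu> (fenchel_conj h)"
    and saddle: "\<exists>xs us. 0 = gradf xs + adjoint K us
                        \<and> K xs \<in> subdiff (fenchel_conj h) us"
    and om_nonneg: "\<omega> \<ge> 0" and omran_nonneg: "\<omega>ran \<ge> 0" and zeta: "0 \<le> \<zeta>" "\<zeta> \<le> 1"
    and x_0: "\<And>w. x 0 w = x0" and u_0: "\<And>w. u 0 w = u0"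
    and xhat_def: "\<And>t w. xhat t w = x t w - \<gamma> *\<^sub>R gradf (x t w) - \<gamma> *\<^sub>R adjoint K (u t w)"
    and r_def: "\<And>t w. r t w = prox (\<lambda>v. ereal \<tau> * fenchel_conj h v) (u t w + \<tau> *\<^sub>R K (xhat t w)) - u t w"
    and u_step: "\<And>t w. u (Suc t) w = u t w + (1 / (1 + \<omega>)) *\<^sub>R Rr t w"
    and x_step: "\<And>t w. x (Suc t) w = xhat t w - (\<gamma> * (1 + \<omega>)) *\<^sub>R
                                       (adjoint K (u (Suc t) w) - adjoint K (u t w))"
    and F_def: "\<And>t. F t = sigma (space M)
                  (\<Union>s\<in>{..t}. {(\<lambda>w. (x s w, u s w)) -` A \<inter> space M | A. A \<in> sets borel})"
    and Rr_meas: "\<And>t. Rr t \<in> borel_measurable M"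
    and unbiased: "\<And>t b. b \<in> Basis \<Longrightarrow>
        AE w in M. real_cond_exp M (F t) (\<lambda>w. Rr t w \<bullet> b) w = r t w \<bullet> b"
    and var1: "\<And>t. AE w in M.
        nn_cond_exp M (F t) (\<lambda>w. ennreal ((norm (Rr t w - r t w))\<^sup>2)) w
          \<le> ennreal (\<omega> * (norm (r t w))\<^sup>2)"
    and var2: "\<And>t. AE w in M.
        nn_cond_exp M (F t) (\<lambda>w. ennreal ((norm (adjoint K (Rr t w - r t w)))\<^sup>2)) w
          + ennreal (\<zeta> * (norm (adjoint K (r t w)))\<^sup>2)
          \<le> ennreal (\<omega>ran * (norm (r t w))\<^sup>2)"
    and nondeg: "lambda_min (K \<circ> adjoint K) > 0 \<or> \<mu> > 0"
    and gamma: "0 < \<gamma>" "\<gamma> * Lf < 2"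
    and tau: "0 < \<tau>"
    and step: "\<gamma> * \<tau> * ((1 - \<zeta>) * (onorm K)\<^sup>2 + \<omega>ran) \<le> 1"
  shows "\<exists>us. (\<forall>v. (\<forall>v'. fenchel_conj (\<lambda>z. ereal (f z)) (- adjoint K v) + fenchel_conj h v
                          \<le> fenchel_conj (\<lambda>z. ereal (f z)) (- adjoint K v') + fenchel_conj h v')
                   \<longleftrightarrow> v = us)
            \<and> (\<lambda>t. \<integral>\<^sup>+ w. ennreal ((norm (u t w - us))\<^sup>2) \<partial>M) \<longlonglongrightarrow> 0"
proof -
  obtain xs us where s1: "0 = gradf xs + adjoint K us" and s2: "K xs \<in> subdiff (fenchel_conj h) us"
    using saddle by blast
  interpret stoch f gradf Lf h K \<mu> \<gamma> \<tau> \<omega> \<omega>ran \<zeta> xs us M x0 u0 x xhat u r Rr F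
    unfolding stoch_def stoch_axioms_def det_def
    by (intro conjI allI impI) (rule assms s1 s2 | assumption)+
  show ?thesis
    using dual_unique[OF nondeg] convergence[OF nondeg] unfolding Dual_def by blast
qed



end
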